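(* Let $\mathrm{char}(K)=0$, $k\ge2$ an integer, and let $h_n$ be the homogeneous component of degree $n$ of $\mathrm{Log}_k(1+x)$. Then $h_0=0$ and $$\frac{d}{dx}h_{n+1}=-n\,h_n\quad\text{for all } n\ge1.$$
   Context: Let $K$ be a field of characteristic $0$ and let $x\neq y$ be two symbols. A finite planar reduced rooted tree is a finite rooted tree in which the children of each vertex are linearly ordered and no vertex has exactly one child; its leaves are the vertices without children. $P(x,y)$ is the set of isomorphism classes of pairs $S=(T,\lambda)$, $T$ a finite planar reduced rooted tree, $\lambda:L(T)\to\{x,y\}$ a labeling of its leaves; $\deg_x(S)=\#\lambda^{-1}(x)$, $\deg S=\#L(T)$. $P'(x,y)=P(x,y)\cup\{1_P\}$ with $1_P$ the empty tree (degree 0). For $m\ge2$, $\bullet_m(S_1,\dots,S_m)$ is the tree with a new root whose ordered children are the roots of $S_1,\dots,S_m$, labelings inherited; on $P'(x,y)$ occurrences of $1_P$ are deleted, with $\bullet_1(S)=S$, $\bullet_0()=1_P$. $K\{\{x,y\}$: all $f=\sum_{S\in P'(x,y)}c_S(f)S$ such that for each $n$ only finitely many $S$ with $\deg_x(S)=n$ have $c_S(f)\ne0$; products $f_1\cdot\ldots\cdot f_m=\bullet_m(f_1,\dots,f_m)$ with $c_S(f_1\cdot\ldots\cdot f_m)=\sum_{\bullet_m(S_1,\dots,S_m)=S}c_{S_1}(f_1)\cdots c_{S_m}(f_m)$; $x$-adic topology from $\mathrm{ord}_x(f)=\min\{\deg_x S:c_S(f)\ne0\}$. $K\{\{x\}\}$: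 series supported on $1_P$ and trees with all leaves labeled $x$; we write $1=1_P$; the homogeneous component of degree $n$ of $f$ is the sum of its terms supported on trees with $n$ leaves. For $g,h\in K\{\{x,y\}$ with $\mathrm{ord}_x(g)\ge1$, $\varphi_{(g,h)}$ denotes the unique $x$-adically continuous $K$-linear map preserving $1_P$ and all $\bullet_m$ with $x\mapsto g$, $y\mapsto h$; for $f\in K\{\{x\}\}$, $f(g(x))$ denotes $\varphi_{(g,h)}(f)$. The universal derivation $d:K\{\{x\}\}\to K\{\{x,y\}$ is the continuous $K$-linear map with $d(1_P)=0$ and, for a tree $S=(T,\lambda)$ with all leaves $l_1,\dots,l_m$ labeled $x$, $d(S)=\sum_{i=1}^m(T,\lambda^{(i)})$ with $\lambda^{(i)}$ labeling $l_i$ by $y$ and the other leaves by $x$. The derivative is $\frac{d}{dx}:=\varphi_{(x,1)}\circ d$. For an integer $k\ge2$, the $k$-ary planar exponential series $\mathrm{Exp}_k(x)=\sum_{n\ge0}f_n$ ($f_n$ homogeneous of degree $n$) is the unique series in $K\{\{x\}\}$ with $f_0=1$, $f_1=x$ and $k^nf_n=\sum_{i_1+\dots+i_k=n}f_{i_1}\cdot\ldots\cdot f_{i_k}$ ($k$-ary products) for all $n$. The $k$-ary planar logarithm $\mathrm{Log}_k(1+x)$ is the series $h\in K\{\{x\}\}$ with zero constant term (coefficient of $1_P$) which is inverse to $\mathrm{Exp}_k(x)-1$ under substitution: $h(\mathrm{Exp}_k(x)-1)=x$. *)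

theory Defs
  imports Main
begin

datatype lbl = X | Y

(* Planar rooted trees with labelled leaves.  The empty tree 1_P is represented
   by Node [] ; genuine (reduced) trees have every inner node with >= 2 children. *)
datatype ptree = Leaf lbl | Node "ptree list"

definition oneP :: ptree where "oneP = Node []"

fun reduced :: "ptree \<Rightarrow> bool" where
  "reduced (Leaf a) = True"
| "reduced (Node ts) = (2 \<le> length ts \<and> (\<forall>t\<in>set ts. reduced t))"

definition valid :: "ptree \<Rightarrow> bool" where
  "valid S \<longleftrightarrow> S = oneP \<or> reduced S"

fun nleaves :: "ptree \<Rightarrow> nat" where
  "nleaves (Leaf a) = 1"
| "nleaves (Node ts) = sum_list (map nleaves ts)"

fun degx :: "ptree \<Rightarrow> nat" where
  "degx (Leaf a) = (if a = X then 1 else 0)"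
| "degx (Node ts) = sum_list (map degx ts)"

fun allx :: "ptree \<Rightarrow> bool" where
  "allx (Leaf a) = (a = X)"
| "allx (Node ts) = (\<forall>t\<in>set ts. allx t)"

definition bullet :: "ptree list \<Rightarrow> ptree" where
  "bullet ss = (let ts = filter (\<lambda>s. s \<noteq> oneP) ss in
     if ts = [] then oneP else if length ts = 1 then hd ts else Node ts)"

type_synonym 'a ser = "ptree \<Rightarrow> 'a"

definition series :: "'a::zero ser \<Rightarrow> bool" where
  "series f \<longleftrightarrow> (\<forall>T. f T \<noteq> 0 \<longrightarrow> valid T) \<and> (\<forall>n. finite {T. degx T = n \<and> f T \<noteq> 0})"

definition xseries :: "'a::zero ser \<Rightarrow> bool" where
  "xseries f \<longleftrightarrow> series f \<and> (\<forall>T. f T \<noteq> 0 \<longrightarrow> allx T)"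

definition one_ser :: "'a::{zero,one} ser" where
  "one_ser = (\<lambda>T. if T = oneP then 1 else 0)"

definition x_ser :: "'a::{zero,one} ser" where
  "x_ser = (\<lambda>T. if T = Leaf X then 1 else 0)"

definition y_ser :: "'a::{zero,one} ser" where
  "y_ser = (\<lambda>T. if T = Leaf Y then 1 else 0)"

definition prodm :: "'a::comm_semiring_1 ser list \<Rightarrow> 'a ser" where
  "prodm fs S = (\<Sum>ss\<in>{ss. length ss = length fs \<and> (\<forall>s\<in>set ss. valid s) \<and> bullet ss = S}.
       \<Prod>i<length fs. (fs ! i) (ss ! i))"

definition hcomp :: "nat \<Rightarrow> 'a::zero ser \<Rightarrow> 'a ser" where
  "hcomp n f = (\<lambda>T. if nleaves T = n then f T else 0)"

fun phi_tree :: "'a::comm_semiring_1 ser \<Rightarrow> 'a ser \<Rightarrow> ptree \<Rightarrow> 'a ser" where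
  "phi_tree g h (Leaf a) = (if a = X then g else h)"
| "phi_tree g h (Node ts) = prodm (map (phi_tree g h) ts)"

(* \<phi>_(g,h)(f), the x-adically continuous extension: coefficientwise a finite sum *)
definition subst :: "'a::comm_semiring_1 ser \<Rightarrow> 'a ser \<Rightarrow> 'a ser \<Rightarrow> 'a ser" where
  "subst g h f = (\<lambda>T. \<Sum>S\<in>{S. f S * phi_tree g h S T \<noteq> 0}. f S * phi_tree g h S T)"

(* all trees obtained by relabelling exactly one x-leaf by y (with multiplicity) *)
fun relabels :: "ptree \<Rightarrow> ptree list" and relabelsl :: "ptree list \<Rightarrow> ptree list list" where
  "relabels (Leaf a) = (if a = X then [Leaf Y] else [])"
| "relabels (Node ts) = map Node (relabelsl ts)"
| "relabelsl [] = []"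
| "relabelsl (t # ts) = map (\<lambda>t'. t' # ts) (relabels t) @ map (\<lambda>us. t # us) (relabelsl ts)"

definition dser :: "'a::comm_semiring_1 ser \<Rightarrow> 'a ser" where
  "dser f = (\<lambda>T. \<Sum>S\<in>{S. f S \<noteq> 0 \<and> T \<in> set (relabels S)}. f S * of_nat (count_list (relabels S) T))"

definition dx :: "'a::comm_semiring_1 ser \<Rightarrow> 'a ser" where
  "dx f = subst x_ser one_ser (dser f)"

definition is_Exp :: "nat \<Rightarrow> 'a::field_char_0 ser \<Rightarrow> bool" where
  "is_Exp k E \<longleftrightarrow> xseries E \<and> hcomp 0 E = one_ser \<and> hcomp 1 E = x_ser \<and>
     (\<forall>n. (\<lambda>T. of_nat k ^ n * hcomp n E T) =
          (\<lambda>T. \<Sum>is\<in>{is. length is = k \<and> sum_list is = n}. prodm (map (\<lambda>i. hcomp i E) is) T))"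

definition is_Log :: "nat \<Rightarrow> 'a::field_char_0 ser \<Rightarrow> 'a ser \<Rightarrow> bool" where
  "is_Log k E h \<longleftrightarrow> xseries h \<and> h oneP = 0 \<and>
     subst (\<lambda>T. E T - one_ser T) y_ser h = x_ser"

end

theory Submission
  imports Defs
begin
lemma nleaves_oneP[simp]: "nleaves oneP = 0" and degx_oneP[simp]: "degx oneP = 0"
  and allx_oneP[simp]: "allx oneP" and reduced_oneP[simp]: "\<not> reduced oneP"
  by (auto simp: oneP_def)

lemma valid_oneP[simp]: "valid oneP" by (simp add: valid_def)

lemma reduced_pos: "reduced T \<Longrightarrow> 0 < nleaves T"
proof (induction T)
  case (Leaf a) then show ?case by simp
next
  case (Node ts)
  then obtain t where t: "t \<in> set ts" by (cases ts) auto
  with Node have "0 < nleaves t" by auto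
  moreover have "nleaves t \<le> sum_list (map nleaves ts)"
    using t by (simp add: member_le_sum_list)
  ultimately show ?case by simp
qed

lemma reduced_not_oneP: "reduced T \<Longrightarrow> T \<noteq> oneP" by auto

lemma valid_nleaves0: "valid T \<Longrightarrow> nleaves T = 0 \<Longrightarrow> T = oneP"
  using reduced_pos valid_def by fastforce

lemma valid_not_oneP: "valid T \<Longrightarrow> T \<noteq> oneP \<Longrightarrow> reduced T"
  by (simp add: valid_def)

lemma allx_degx: "allx T \<Longrightarrow> degx T = nleaves T"
proof (induction T)
  case (Leaf a) then show ?case by simp
next
  case (Node ts)
  then have "map degx ts = map nleaves ts" by auto
  then show ?case by (metis degx.simps(2) nleaves.simps(2))
qed

abbreviation fil :: "ptree list \<Rightarrow> ptree list" where "fil ss \<equiv> filter (\<lambda>s. s \<noteq> oneP) ss"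

lemma bullet_fil: "bullet (fil ss) = bullet ss"
  by (simp add: bullet_def)

lemma bullet_nil: "fil ss = [] \<Longrightarrow> bullet ss = oneP"
  by (simp add: bullet_def)

lemma bullet_one: "fil ss = [t] \<Longrightarrow> bullet ss = t"
  by (simp add: bullet_def)

lemma bullet_node: "2 \<le> length (fil ss) \<Longrightarrow> bullet ss = Node (fil ss)"
  by (auto simp: bullet_def Let_def)

lemma bullet_cases:
  obtains "fil ss = []" "bullet ss = oneP"
  | t where "fil ss = [t]" "bullet ss = t"
  | "2 \<le> length (fil ss)" "bullet ss = Node (fil ss)"
proof -
  consider "length (fil ss) = 0" | "length (fil ss) = 1" | "2 \<le> length (fil ss)" by linarith
  then show ?thesis
  proof cases
    case 1 then show ?thesis using that bullet_nil by auto
  next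
    case 2 then obtain t where "fil ss = [t]"
      by (metis One_nat_def length_0_conv length_Suc_conv)
    then show ?thesis using that bullet_one by auto
  next
    case 3 then show ?thesis using that bullet_node by auto
  qed
qed

lemma bullet_no_oneP: "\<forall>s\<in>set ss. s \<noteq> oneP \<Longrightarrow> 2 \<le> length ss \<Longrightarrow> bullet ss = Node ss"
proof -
  assume a: "\<forall>s\<in>set ss. s \<noteq> oneP" "2 \<le> length ss"
  then have "fil ss = ss" by (simp add: filter_id_conv)
  then show ?thesis using bullet_node a by metis
qed

lemma bullet_single[simp]: "bullet [s] = s"
  by (simp add: bullet_def)

lemma bullet_Nil[simp]: "bullet [] = oneP"
  by (simp add: bullet_def)

lemma bullet_append_oneP: "bullet (A @ oneP # B) = bullet (A @ B)"
  by (simp add: bullet_def)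

lemma nleaves_bullet: "nleaves (bullet ss) = sum_list (map nleaves ss)"
proof -
  have e: "sum_list (map nleaves (fil ss)) = sum_list (map nleaves ss)"
    by (rule sum_list_map_filter) auto
  show ?thesis
  proof (cases ss rule: bullet_cases)
    case 1 then show ?thesis using e by simp
  next
    case (2 t) then show ?thesis using e by simp
  next
    case 3 then show ?thesis using e by simp
  qed
qed

lemma valid_bullet: "\<forall>s\<in>set ss. valid s \<Longrightarrow> valid (bullet ss)"
proof (cases ss rule: bullet_cases)
  case 1 then show ?thesis by simp
next
  case (2 t)
  assume "\<forall>s\<in>set ss. valid s"
  moreover have "t \<in> set (fil ss)" using 2 by simp
  then have "t \<in> set ss" by simp
  ultimately show ?thesis using 2 by simp
next
  case 3
  assume v: "\<forall>s\<in>set ss. valid s"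
  have "reduced (Node (fil ss))" using 3 v by (auto simp: valid_def)
  then show ?thesis using 3 by (simp add: valid_def)
qed

lemma allx_bullet: "\<forall>s\<in>set ss. allx s \<Longrightarrow> allx (bullet ss)"
proof (cases ss rule: bullet_cases)
  case 1 then show ?thesis by simp
next
  case (2 t)
  assume "\<forall>s\<in>set ss. allx s"
  moreover have "t \<in> set (fil ss)" using 2 by simp
  then have "t \<in> set ss" by simp
  ultimately show ?thesis using 2 by simp
next
  case 3
  assume "\<forall>s\<in>set ss. allx s"
  then show ?thesis using 3 by simp
qed

definition children :: "ptree \<Rightarrow> ptree set" where
  "children T = (case T of Node ts \<Rightarrow> set ts | Leaf a \<Rightarrow> {})"

lemma bullet_elem: "s \<in> set ss \<Longrightarrow> s \<noteq> oneP \<Longrightarrow> s = bullet ss \<or> s \<in> children (bullet ss)"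
proof (cases ss rule: bullet_cases)
  case 1
  assume "s \<in> set ss" "s \<noteq> oneP"
  then have "s \<in> set (fil ss)" by simp
  then show ?thesis using 1 by simp
next
  case (2 t)
  assume "s \<in> set ss" "s \<noteq> oneP"
  then have "s \<in> set (fil ss)" by simp
  then show ?thesis using 2 by simp
next
  case 3
  assume "s \<in> set ss" "s \<noteq> oneP"
  then have "s \<in> set (fil ss)" by simp
  then show ?thesis using 3 by (simp add: children_def)
qed

definition dec :: "nat \<Rightarrow> ptree \<Rightarrow> ptree list set" where
  "dec m T = {ss. length ss = m \<and> (\<forall>s\<in>set ss. valid s) \<and> bullet ss = T}"

lemma finite_children: "finite (children T)"
  by (cases T) (auto simp: children_def)

lemma finite_dec: "finite (dec m T)"
proof -
  let ?C = "insert oneP (insert T (children T))"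
  have "dec m T \<subseteq> {ss. set ss \<subseteq> ?C \<and> length ss = m}"
    using bullet_elem by (fastforce simp: dec_def)
  moreover have "finite {ss. set ss \<subseteq> ?C \<and> length ss = m}"
    by (rule finite_lists_length_eq) (simp add: finite_children)
  ultimately show ?thesis by (rule finite_subset)
qed

lemma prod_idx_list:
  "length ss = length fs \<Longrightarrow> (\<Prod>i<length fs. (fs ! i) (ss ! i)) = prod_list (map2 (\<lambda>f s. f s) fs ss)"
proof (induction fs arbitrary: ss)
  case Nil then show ?case by simp
next
  case (Cons f fs)
  then obtain s ss' where ss: "ss = s # ss'" by (cases ss) auto
  have "(\<Prod>i<length (f # fs). ((f # fs) ! i) (ss ! i)) = f s * (\<Prod>i<length fs. (fs ! i) (ss' ! i))"
    by (simp only: ss length_Cons prod.lessThan_Suc_shift) simp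
  also have "\<dots> = prod_list (map2 (\<lambda>f s. f s) (f # fs) ss)"
    using Cons ss by simp
  finally show ?case .
qed

lemma prodm_dec: "prodm fs T = (\<Sum>ss\<in>dec (length fs) T. prod_list (map2 (\<lambda>f s. f s) fs ss))"
  unfolding prodm_def dec_def
  by (rule sum.cong) (auto simp: prod_idx_list)

definition delta :: "ptree \<Rightarrow> 'a::{zero,one} ser" where
  "delta S = (\<lambda>T. if T = S then 1 else 0)"

abbreviation lists_of :: "ptree set \<Rightarrow> nat \<Rightarrow> ptree list set" where
  "lists_of A n \<equiv> {ss. set ss \<subseteq> A \<and> length ss = n}"

lemma prodm_idx: "prodm fs T = (\<Sum>ss\<in>dec (length fs) T. \<Prod>i<length fs. (fs ! i) (ss ! i))"
  unfolding prodm_def dec_def by simp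

lemma pl_app: "length ss1 = length A \<Longrightarrow>
  prod_list (map2 (\<lambda>f s. f s) (A @ B) (ss1 @ ss2)) =
  prod_list (map2 (\<lambda>f s. f s) A ss1) * prod_list (map2 (\<lambda>f s. f s) B ss2)"
  by (simp add: zip_append)

lemma pl_zero: "length ss = length fs \<Longrightarrow> i < length fs \<Longrightarrow> (fs ! i) (ss ! i) = (0::'a::field_char_0) \<Longrightarrow>
  prod_list (map2 (\<lambda>f s. f s) fs ss) = 0"
proof -
  assume a: "length ss = length fs" "i < length fs" "(fs ! i) (ss ! i) = (0::'a)"
  have "(fs ! i, ss ! i) \<in> set (zip fs ss)" using a by (metis in_set_zip fst_conv snd_conv)
  then have "0 \<in> set (map2 (\<lambda>f s. f s) fs ss)" using a(3) by force
  then show ?thesis by (simp add: prod_list_zero_iff)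
qed

lemma pl_deltas: "length ss' = length ss \<Longrightarrow>
  prod_list (map2 (\<lambda>f s. f s) (map delta ss) ss') = (if ss' = ss then (1::'a::field_char_0) else 0)"
proof (induction ss arbitrary: ss')
  case Nil then show ?case by simp
next
  case (Cons s ss)
  then obtain s' ss'' where "ss' = s' # ss''" by (cases ss') auto
  with Cons show ?case by (auto simp: delta_def)
qed

lemma prodm_nil: "prodm [] = (one_ser :: 'a::field_char_0 ser)"
proof
  fix T
  have "dec 0 T = (if T = oneP then {[]} else {})" by (auto simp: dec_def)
  then show "prodm [] T = (one_ser::'a ser) T" by (simp add: prodm_dec one_ser_def)
qed

lemma prodm_single: "prodm [g] = (\<lambda>T. if valid T then (g T :: 'a::field_char_0) else 0)"
proof
  fix T
  have "dec 1 T = (if valid T then {[T]} else {})"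
    by (auto simp: dec_def length_Suc_conv)
  then show "prodm [g] T = (if valid T then g T else 0)" by (simp add: prodm_dec)
qed

lemma prodm_valid: "prodm fs T \<noteq> 0 \<Longrightarrow> valid T"
proof -
  assume "prodm fs T \<noteq> 0"
  then have "dec (length fs) T \<noteq> {}" unfolding prodm_dec by auto
  then obtain ss where "ss \<in> dec (length fs) T" by auto
  then show ?thesis using valid_bullet by (auto simp: dec_def)
qed

lemma prodm_deltas: "\<forall>s\<in>set ss. valid s \<Longrightarrow> prodm (map delta ss) = (delta (bullet ss) :: 'a::field_char_0 ser)"
proof
  fix T assume v: "\<forall>s\<in>set ss. valid s"
  have "prodm (map delta ss) T = (\<Sum>ss'\<in>dec (length ss) T. (if ss' = ss then (1::'a) else 0))"
    unfolding prodm_dec by (rule sum.cong) (auto simp: dec_def pl_deltas)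
  also have "\<dots> = (if ss \<in> dec (length ss) T then 1 else 0)"
    using finite_dec by (simp add: sum.delta')
  also have "\<dots> = delta (bullet ss) T" using v by (auto simp: dec_def delta_def)
  finally show "prodm (map delta ss) T = (delta (bullet ss) :: 'a ser) T" .
qed

lemma split_list_at: "length ss = length A + 1 + length B \<Longrightarrow>
  \<exists>ss1 s ss2. ss = ss1 @ s # ss2 \<and> length ss1 = length A \<and> length ss2 = length B"
  by (rule exI[of _ "take (length A) ss"], rule exI[of _ "ss ! length A"], rule exI[of _ "drop (Suc (length A)) ss"])
     (auto simp: id_take_nth_drop[symmetric])

lemma prodm_unit: "prodm (A @ one_ser # B) = (prodm (A @ B) :: 'a::field_char_0 ser)"
proof
  fix T
  let ?P = "\<lambda>fs ss. prod_list (map2 (\<lambda>f s. f s) fs ss) :: 'a"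
  define ins where "ins = (\<lambda>ss'. take (length A) ss' @ oneP # drop (length A) ss')"
  have sub: "ins ` dec (length (A @ B)) T \<subseteq> dec (length (A @ one_ser # B)) T"
  proof
    fix ss assume "ss \<in> ins ` dec (length (A @ B)) T"
    then obtain ss' where ss': "ss' \<in> dec (length (A @ B)) T" "ss = ins ss'" by blast
    have st: "set ss \<subseteq> insert oneP (set ss')"
      unfolding ss'(2) ins_def using set_take_subset[of "length A" ss'] set_drop_subset[of "length A" ss'] by auto
    have "bullet ss = bullet ss'" unfolding ss'(2) ins_def
      by (metis append_take_drop_id bullet_append_oneP)
    then show "ss \<in> dec (length (A @ one_ser # B)) T"
      using ss' st unfolding dec_def ins_def by auto
  qed
  have z: "\<forall>ss\<in>dec (length (A @ one_ser # B)) T - ins ` dec (length (A @ B)) T. ?P (A @ one_ser # B) ss = 0"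
  proof
    fix ss assume ss: "ss \<in> dec (length (A @ one_ser # B)) T - ins ` dec (length (A @ B)) T"
    then obtain ss1 s ss2 where sp: "ss = ss1 @ s # ss2" "length ss1 = length A" "length ss2 = length B"
      using split_list_at[of ss A B] by (auto simp: dec_def)
    show "?P (A @ one_ser # B) ss = 0"
    proof (cases "s = oneP")
      case True
      then have "ss = ins (ss1 @ ss2)" using sp by (simp add: ins_def)
      moreover have "ss1 @ ss2 \<in> dec (length (A @ B)) T"
        using ss sp True by (auto simp: dec_def bullet_append_oneP)
      ultimately show ?thesis using ss by blast
    next
      case False
      then show ?thesis using sp by (simp add: pl_app one_ser_def)
    qed
  qed
  have inj: "inj_on ins (dec (length (A @ B)) T)"
  proof
    fix x y assume "x \<in> dec (length (A @ B)) T" "y \<in> dec (length (A @ B)) T" "ins x = ins y"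
    then have l: "length x = length y" and e: "ins x = ins y" by (auto simp: dec_def)
    have lt: "length (take (length A) x) = length (take (length A) y)" using l by simp
    from e have "take (length A) x = take (length A) y \<and> oneP # drop (length A) x = oneP # drop (length A) y"
      unfolding ins_def using append_eq_append_conv[OF disjI1[OF lt]] by blast
    then show "x = y" by (metis append_take_drop_id list.inject)
  qed
  have "prodm (A @ one_ser # B) T = (\<Sum>ss\<in>dec (length (A @ one_ser # B)) T. ?P (A @ one_ser # B) ss)"
    by (simp add: prodm_dec)
  also have "\<dots> = (\<Sum>ss\<in>ins ` dec (length (A @ B)) T. ?P (A @ one_ser # B) ss)"
    using sub z finite_dec by (intro sum.mono_neutral_right) auto
  also have "\<dots> = (\<Sum>ss\<in>dec (length (A @ B)) T. ?P (A @ one_ser # B) (ins ss))"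
    using inj by (simp add: sum.reindex)
  also have "\<dots> = (\<Sum>ss\<in>dec (length (A @ B)) T. ?P (A @ B) ss)"
  proof (rule sum.cong)
    fix ss assume "ss \<in> dec (length (A @ B)) T"
    then have l: "length ss = length A + length B" by (simp add: dec_def)
    have "?P (A @ one_ser # B) (ins ss) = ?P A (take (length A) ss) * ?P (one_ser # B) (oneP # drop (length A) ss)"
      unfolding ins_def using l by (intro pl_app) simp
    also have "\<dots> = ?P A (take (length A) ss) * ?P B (drop (length A) ss)"
      by (simp add: one_ser_def)
    also have "\<dots> = ?P (A @ B) (take (length A) ss @ drop (length A) ss)"
      using l by (subst pl_app) simp_all
    finally show "?P (A @ one_ser # B) (ins ss) = ?P (A @ B) ss" by simp
  qed simp
  also have "\<dots> = prodm (A @ B) T" by (simp add: prodm_dec)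
  finally show "prodm (A @ one_ser # B) T = prodm (A @ B) T" .
qed

lemma prodm_zero: "prodm (A @ (\<lambda>_. 0) # B) = (\<lambda>_. 0 :: 'a::field_char_0)"
proof
  fix T
  show "prodm (A @ (\<lambda>_. 0) # B) T = (0::'a)"
    unfolding prodm_dec
  proof (rule sum.neutral, rule ballI)
    fix ss assume "ss \<in> dec (length (A @ (\<lambda>_. (0::'a)) # B)) T"
    then obtain ss1 s ss2 where sp: "ss = ss1 @ s # ss2" "length ss1 = length A" "length ss2 = length B"
      using split_list_at[of ss A B] by (auto simp: dec_def)
    then show "prod_list (map2 (\<lambda>f s. f s) (A @ (\<lambda>_. 0) # B) ss) = (0::'a)"
      by (simp add: pl_app)
  qed
qed

lemma prodm_expand:
  assumes A: "finite A" "\<forall>s\<in>A. valid s" and fs: "\<forall>f\<in>set fs. \<forall>T. f T \<noteq> 0 \<longrightarrow> T \<in> A"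
  shows "prodm fs T = (\<Sum>ss\<in>lists_of A (length fs).
            if bullet ss = T then prod_list (map2 (\<lambda>f s. f s) fs ss) else (0::'a::field_char_0))"
proof -
  let ?P = "\<lambda>ss. prod_list (map2 (\<lambda>f s. f s) fs ss) :: 'a"
  have fin: "finite (lists_of A (length fs))" using A by (simp add: finite_lists_length_eq)
  have "(\<Sum>ss\<in>lists_of A (length fs). if bullet ss = T then ?P ss else 0) =
        (\<Sum>ss\<in>{ss\<in>lists_of A (length fs). bullet ss = T}. ?P ss)"
    by (rule sum.inter_filter[OF fin, symmetric])
  also have "\<dots> = (\<Sum>ss\<in>dec (length fs) T. ?P ss)"
  proof (rule sum.mono_neutral_left[OF finite_dec])
    show "{ss \<in> lists_of A (length fs). bullet ss = T} \<subseteq> dec (length fs) T"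
      using A by (auto simp: dec_def)
    show "\<forall>i\<in>dec (length fs) T - {ss \<in> lists_of A (length fs). bullet ss = T}. ?P i = 0"
    proof
      fix ss assume ss: "ss \<in> dec (length fs) T - {ss \<in> lists_of A (length fs). bullet ss = T}"
      then obtain s where s: "s \<in> set ss" "s \<notin> A" by (auto simp: dec_def)
      then obtain i where i: "i < length ss" "ss ! i = s" by (auto simp: in_set_conv_nth)
      have l: "length ss = length fs" using ss by (simp add: dec_def)
      have "fs ! i \<in> set fs" using i l by simp
      then have "(fs ! i) (ss ! i) = 0" using fs s i by blast
      then show "?P ss = 0" using pl_zero[OF l] i l by simp
    qed
  qed
  finally show ?thesis by (simp add: prodm_dec)
qed

lemma prod_sum_lists:
  assumes "finite A"
  shows "(\<Prod>i<n. \<Sum>s\<in>A. F i s) = (\<Sum>ss\<in>lists_of A n. \<Prod>i<n. F i (ss ! i) :: 'a::field_char_0)"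
proof (induction n arbitrary: F)
  case 0
  have "lists_of A 0 = {[]}" by auto
  then show ?case by simp
next
  case (Suc n)
  have img: "lists_of A (Suc n) = (\<lambda>(s, ss). s # ss) ` (A \<times> lists_of A n)"
    by (auto simp: length_Suc_conv image_iff)
  have inj: "inj_on (\<lambda>(s, ss). s # ss) (A \<times> lists_of A n)" by (auto simp: inj_on_def)
  have "(\<Prod>i<Suc n. \<Sum>s\<in>A. F i s) = (\<Sum>s\<in>A. F 0 s) * (\<Prod>i<n. \<Sum>s\<in>A. F (Suc i) s)"
    by (rule prod.lessThan_Suc_shift)
  also have "\<dots> = (\<Sum>s\<in>A. F 0 s) * (\<Sum>ss\<in>lists_of A n. \<Prod>i<n. F (Suc i) (ss ! i))"
    using Suc[of "\<lambda>i. F (Suc i)"] by simp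
  also have "\<dots> = (\<Sum>(s, ss)\<in>A \<times> lists_of A n. F 0 s * (\<Prod>i<n. F (Suc i) (ss ! i)))"
    by (simp add: sum_product sum.cartesian_product)
  also have "\<dots> = (\<Sum>(s, ss)\<in>A \<times> lists_of A n. \<Prod>i<Suc n. F i ((s # ss) ! i))"
    by (rule sum.cong) (auto simp only: prod.lessThan_Suc_shift nth_Cons_0 nth_Cons_Suc)
  also have "\<dots> = (\<Sum>ss\<in>lists_of A (Suc n). \<Prod>i<Suc n. F i (ss ! i))"
    unfolding img sum.reindex[OF inj] by (rule sum.cong) auto
  finally show ?case .
qed

lemma prodm_multi:
  assumes A: "finite A" and l: "length fs = n"
    and fs: "\<And>i. i < n \<Longrightarrow> fs ! i = (\<lambda>T. \<Sum>s\<in>A. W i s * G i s T)"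
  shows "prodm fs T = (\<Sum>ss\<in>lists_of A n.
           (\<Prod>i<n. W i (ss ! i)) * prodm (map (\<lambda>i. G i (ss ! i)) [0..<n]) T :: 'a::field_char_0)"
proof -
  have "prodm fs T = (\<Sum>ss'\<in>dec n T. \<Prod>i<n. \<Sum>s\<in>A. W i s * G i s (ss' ! i))"
    unfolding prodm_idx l by (rule sum.cong) (auto simp: fs)
  also have "\<dots> = (\<Sum>ss'\<in>dec n T. \<Sum>ss\<in>lists_of A n. \<Prod>i<n. W i (ss ! i) * G i (ss ! i) (ss' ! i))"
    using A by (simp add: prod_sum_lists)
  also have "\<dots> = (\<Sum>ss\<in>lists_of A n. \<Sum>ss'\<in>dec n T. (\<Prod>i<n. W i (ss ! i)) * (\<Prod>i<n. G i (ss ! i) (ss' ! i)))"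
    by (subst sum.swap) (simp add: prod.distrib)
  also have "\<dots> = (\<Sum>ss\<in>lists_of A n. (\<Prod>i<n. W i (ss ! i)) * prodm (map (\<lambda>i. G i (ss ! i)) [0..<n]) T)"
    by (simp add: prodm_idx sum_distrib_left)
  finally show ?thesis .
qed

definition fin :: "'a::zero ser \<Rightarrow> bool" where "fin F \<longleftrightarrow> finite {T. F T \<noteq> 0}"
definition vs :: "'a::zero ser \<Rightarrow> bool" where "vs F \<longleftrightarrow> (\<forall>T. F T \<noteq> 0 \<longrightarrow> valid T)"
definition ax :: "'a::zero ser \<Rightarrow> bool" where "ax F \<longleftrightarrow> (\<forall>T. F T \<noteq> 0 \<longrightarrow> allx T)"
abbreviation supp :: "'a::zero ser \<Rightarrow> ptree set" where "supp F \<equiv> {T. F T \<noteq> 0}"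

lemma subst_expand:
  assumes "fin F" "finite A" "supp F \<subseteq> A"
  shows "subst a b F T = (\<Sum>S\<in>A. F S * phi_tree a b S T :: 'a::field_char_0)"
  unfolding subst_def
proof (rule sum.mono_neutral_left)
  show "finite A" by fact
  show "{S. F S * phi_tree a b S T \<noteq> 0} \<subseteq> A" using assms by auto
qed auto

lemma fin_delta[simp]: "fin (delta S)"
  unfolding fin_def delta_def by (rule finite_subset[of _ "{S}"]) auto

lemma vs_delta: "valid S \<Longrightarrow> vs (delta S)"
  and ax_delta: "allx S \<Longrightarrow> ax (delta S)"
  by (auto simp: delta_def vs_def ax_def)

lemma subst_delta: "subst a b (delta S) = (phi_tree a b S :: 'a::field_char_0 ser)"
proof
  fix T show "subst a b (delta S) T = phi_tree a b S T"
  proof -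
    have "subst a b (delta S) T = (\<Sum>S'\<in>{S}. delta S S' * phi_tree a b S' T)"
      by (rule subst_expand[OF fin_delta]) (auto simp: delta_def)
    then show ?thesis by (simp add: delta_def)
  qed
qed

lemma fin_sum: "finite J \<Longrightarrow> (\<forall>j\<in>J. fin (G j)) \<Longrightarrow> fin (\<lambda>T. \<Sum>j\<in>J. c j * G j T :: 'a::field_char_0)"
proof -
  assume J: "finite J" "\<forall>j\<in>J. fin (G j)"
  have "supp (\<lambda>T. \<Sum>j\<in>J. c j * G j T) \<subseteq> (\<Union>j\<in>J. supp (G j))"
  proof
    fix T assume "T \<in> supp (\<lambda>T. \<Sum>j\<in>J. c j * G j T)"
    then have "(\<Sum>j\<in>J. c j * G j T) \<noteq> 0" by simp
    then obtain j where "j \<in> J" "c j * G j T \<noteq> 0" by (rule sum.not_neutral_contains_not_neutral)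
    then show "T \<in> (\<Union>j\<in>J. supp (G j))" by auto
  qed
  moreover have "finite (\<Union>j\<in>J. supp (G j))" using J by (auto simp: fin_def)
  ultimately show ?thesis unfolding fin_def by (rule finite_subset)
qed

lemma subst_lin:
  assumes J: "finite J" "\<forall>j\<in>J. fin (G j)"
  shows "subst a b (\<lambda>T. \<Sum>j\<in>J. c j * G j T) = (\<lambda>T. \<Sum>j\<in>J. c j * subst a b (G j) T :: 'a::field_char_0)"
proof
  fix T
  let ?A = "\<Union>j\<in>J. supp (G j)"
  have A: "finite ?A" using J by (auto simp: fin_def)
  have sA: "supp (\<lambda>T. \<Sum>j\<in>J. c j * G j T) \<subseteq> ?A"
  proof
    fix T assume "T \<in> supp (\<lambda>T. \<Sum>j\<in>J. c j * G j T)"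
    then have "(\<Sum>j\<in>J. c j * G j T) \<noteq> 0" by simp
    then obtain j where "j \<in> J" "c j * G j T \<noteq> 0" by (rule sum.not_neutral_contains_not_neutral)
    then show "T \<in> ?A" by auto
  qed
  have "subst a b (\<lambda>T. \<Sum>j\<in>J. c j * G j T) T = (\<Sum>S\<in>?A. (\<Sum>j\<in>J. c j * G j S) * phi_tree a b S T)"
    by (rule subst_expand[OF fin_sum[OF J] A sA])
  also have "\<dots> = (\<Sum>j\<in>J. c j * (\<Sum>S\<in>?A. G j S * phi_tree a b S T))"
    by (simp add: sum_distrib_left sum_distrib_right mult.assoc sum.swap[of _ ?A])
  also have "\<dots> = (\<Sum>j\<in>J. c j * subst a b (G j) T)"
    using J A by (intro sum.cong refl arg_cong2[where f="(*)"] subst_expand[symmetric]) auto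
  finally show "subst a b (\<lambda>T. \<Sum>j\<in>J. c j * G j T) T = (\<Sum>j\<in>J. c j * subst a b (G j) T)" .
qed

lemma prodm_nz:
  assumes "prodm fs T \<noteq> (0::'a::field_char_0)"
  shows "\<exists>ss\<in>dec (length fs) T. \<forall>i<length fs. (fs ! i) (ss ! i) \<noteq> 0"
proof -
  from assms obtain ss where "ss \<in> dec (length fs) T" "(\<Prod>i<length fs. (fs ! i) (ss ! i)) \<noteq> 0"
    unfolding prodm_idx by (rule sum.not_neutral_contains_not_neutral)
  then show ?thesis by (metis finite_lessThan lessThan_iff prod_zero_iff)
qed

lemma dec_len: "ss \<in> dec m T \<Longrightarrow> length ss = m" and dec_valid: "ss \<in> dec m T \<Longrightarrow> s \<in> set ss \<Longrightarrow> valid s"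
  and dec_bullet: "ss \<in> dec m T \<Longrightarrow> bullet ss = T"
  by (auto simp: dec_def)

lemma prodm_ax: "\<forall>f\<in>set fs. ax f \<Longrightarrow> ax (prodm fs :: 'a::field_char_0 ser)"
  unfolding ax_def
proof (intro allI impI)
  fix T assume a: "\<forall>f\<in>set fs. \<forall>T. f T \<noteq> 0 \<longrightarrow> allx T" and "prodm fs T \<noteq> (0::'a)"
  then obtain ss where ss: "ss \<in> dec (length fs) T" "\<forall>i<length fs. (fs ! i) (ss ! i) \<noteq> 0"
    using prodm_nz by blast
  have "\<forall>s\<in>set ss. allx s"
  proof
    fix s assume "s \<in> set ss"
    then obtain i where "i < length ss" "ss ! i = s" by (auto simp: in_set_conv_nth)
    then show "allx s" using a ss dec_len[OF ss(1)] by (metis nth_mem)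
  qed
  then show "allx T" using allx_bullet dec_bullet[OF ss(1)] by blast
qed

lemma prodm_vs: "vs (prodm fs :: 'a::field_char_0 ser)"
  using prodm_valid by (auto simp: vs_def)

lemma prodm_fin:
  assumes "\<forall>f\<in>set fs. fin f \<and> vs f"
  shows "fin (prodm fs :: 'a::field_char_0 ser)"
proof -
  let ?A = "\<Union>f\<in>set fs. supp f"
  have A: "finite ?A" "\<forall>s\<in>?A. valid s" using assms by (auto simp: fin_def vs_def)
  have "supp (prodm fs) \<subseteq> bullet ` lists_of ?A (length fs)"
  proof
    fix T assume "T \<in> supp (prodm fs)"
    then have "prodm fs T \<noteq> 0" by simp
    moreover have "prodm fs T = (\<Sum>ss\<in>lists_of ?A (length fs). if bullet ss = T then prod_list (map2 (\<lambda>f s. f s) fs ss) else (0::'a))"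
      by (rule prodm_expand[OF A(1) A(2)]) auto
    ultimately have "(\<Sum>ss\<in>lists_of ?A (length fs). if bullet ss = T then prod_list (map2 (\<lambda>f s. f s) fs ss) else (0::'a)) \<noteq> 0"
      by simp
    then obtain ss where ss: "ss \<in> lists_of ?A (length fs)"
        "(if bullet ss = T then prod_list (map2 (\<lambda>f s. f s) fs ss) else (0::'a)) \<noteq> 0"
      by (rule sum.not_neutral_contains_not_neutral)
    then have "bullet ss = T" by (cases "bullet ss = T") auto
    then show "T \<in> bullet ` lists_of ?A (length fs)" using ss(1) by blast
  qed
  moreover have "finite (bullet ` lists_of ?A (length fs))" using A by (simp add: finite_lists_length_eq)
  ultimately show ?thesis unfolding fin_def by (rule finite_subset)
qed

lemma phi_oneP: "phi_tree a b oneP = (one_ser :: 'a::field_char_0 ser)"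
  by (simp add: oneP_def prodm_nil)

lemma phi_vs: "vs a \<Longrightarrow> vs b \<Longrightarrow> vs (phi_tree a b S :: 'a::field_char_0 ser)"
  by (cases S) (auto simp: prodm_vs)

lemma phi_fin: "vs a \<Longrightarrow> vs b \<Longrightarrow> fin a \<Longrightarrow> fin b \<Longrightarrow> fin (phi_tree a b S :: 'a::field_char_0 ser)"
proof (induction S)
  case (Leaf x) then show ?case by simp
next
  case (Node ts)
  have "\<forall>f\<in>set (map (phi_tree a b) ts). fin f \<and> vs f"
  proof
    fix f assume "f \<in> set (map (phi_tree a b) ts)"
    then obtain t where t: "t \<in> set ts" "f = phi_tree a b t" by auto
    show "fin f \<and> vs f" using Node.IH[OF t(1) Node.prems] phi_vs[OF Node.prems(1,2)] t by simp
  qed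
  then show ?case unfolding phi_tree.simps by (rule prodm_fin)
qed

lemma phi_ax: "ax a \<Longrightarrow> allx S \<Longrightarrow> ax (phi_tree a b S :: 'a::field_char_0 ser)"
proof (induction S)
  case (Leaf x) then show ?case by simp
next
  case (Node ts)
  have "\<forall>f\<in>set (map (phi_tree a b) ts). ax f"
  proof
    fix f assume "f \<in> set (map (phi_tree a b) ts)"
    then obtain t where t: "t \<in> set ts" "f = phi_tree a b t" by auto
    have "allx t" using Node.prems(2) t by simp
    then show "ax f" using Node.IH[OF t(1) Node.prems(1)] t by simp
  qed
  then show ?case unfolding phi_tree.simps by (rule prodm_ax)
qed

lemma phi_b_indep: "allx S \<Longrightarrow> phi_tree a b S = (phi_tree a b' S :: 'a::field_char_0 ser)"
proof (induction S)
  case (Leaf x) then show ?case by simp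
next
  case (Node ts)
  then have m: "map (phi_tree a b) ts = map (phi_tree a b') ts" by auto
  then show ?case by (simp only: phi_tree.simps m)
qed

lemma x_ser_delta: "x_ser = delta (Leaf X)" and y_ser_delta: "y_ser = delta (Leaf Y)"
  and one_ser_delta: "one_ser = delta oneP"
  by (auto simp: x_ser_def y_ser_def one_ser_def delta_def)

lemma phi_x: "allx S \<Longrightarrow> valid S \<Longrightarrow> phi_tree x_ser b S = (delta S :: 'a::field_char_0 ser)"
proof (induction S)
  case (Leaf x) then show ?case by (simp add: x_ser_delta)
next
  case (Node ts)
  show ?case
  proof (cases "ts = []")
    case True then show ?thesis by (simp add: prodm_nil one_ser_delta oneP_def)
  next
    case False
    then have r: "reduced (Node ts)" using Node.prems by (auto simp: valid_def oneP_def)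
    then have c: "\<forall>t\<in>set ts. reduced t" "2 \<le> length ts" by auto
    then have m: "map (phi_tree x_ser b) ts = map delta ts" using Node by (auto simp: valid_def)
    then have "phi_tree x_ser b (Node ts) = prodm (map delta ts)" by (simp only: phi_tree.simps m)
    also have "\<dots> = delta (bullet ts)" using c by (intro prodm_deltas) (auto simp: valid_def)
    also have "bullet ts = Node ts" using c reduced_not_oneP by (intro bullet_no_oneP) auto
    finally show ?thesis .
  qed
qed

lemma prodm_fil: "F oneP = one_ser \<Longrightarrow> prodm (A @ map F ss) = (prodm (A @ map F (fil ss)) :: 'a::field_char_0 ser)"
proof (induction ss arbitrary: A)
  case Nil then show ?case by simp
next
  case (Cons s ss)
  show ?case
  proof (cases "s = oneP")
    case True
    then have "prodm (A @ map F (s # ss)) = prodm (A @ one_ser # map F ss)" using Cons by simp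
    also have "\<dots> = prodm (A @ map F ss)" by (rule prodm_unit)
    also have "\<dots> = prodm (A @ map F (fil ss))" using Cons by blast
    finally show ?thesis using True by simp
  next
    case False
    have "prodm (A @ map F (s # ss)) = prodm ((A @ [F s]) @ map F ss)" by simp
    also have "\<dots> = prodm ((A @ [F s]) @ map F (fil ss))" using Cons by blast
    finally show ?thesis using False by simp
  qed
qed

lemma prodm_single_vs: "vs g \<Longrightarrow> prodm [g] = (g :: 'a::field_char_0 ser)"
  by (auto simp: prodm_single vs_def fun_eq_iff)

lemma phi_bullet:
  assumes ab: "vs a" "vs b" and v: "\<forall>s\<in>set ss. valid s"
  shows "phi_tree a b (bullet ss) = prodm (map (phi_tree a b) ss :: 'a::field_char_0 ser list)"
proof -
  have f: "prodm (map (phi_tree a b) ss) = prodm (map (phi_tree a b) (fil ss) :: 'a ser list)"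
    using prodm_fil[of "phi_tree a b" "[]" ss, OF phi_oneP] by simp
  show ?thesis
  proof (cases ss rule: bullet_cases)
    case 1 then show ?thesis using f by (simp add: phi_oneP prodm_nil)
  next
    case (2 t) then show ?thesis using f prodm_single_vs[OF phi_vs[OF ab]] by simp
  next
    case 3 then show ?thesis using f by simp
  qed
qed

lemma map_idx: "length ss = n \<Longrightarrow> map (\<lambda>i. f (ss ! i)) [0..<n] = map f ss"
  by (rule nth_equalityI) auto

lemma prodm_supp:
  assumes A: "finite A" "\<forall>s\<in>A. valid s" and fs: "\<forall>f\<in>set fs. \<forall>T. f T \<noteq> 0 \<longrightarrow> T \<in> A"
  shows "prodm fs T = (\<Sum>ss\<in>lists_of A (length fs). prod_list (map2 (\<lambda>f s. f s) fs ss) * delta (bullet ss) T :: 'a::field_char_0)"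
  unfolding prodm_expand[OF A fs] by (rule sum.cong) (auto simp: delta_def)

lemma ser_delta_expand: "finite A \<Longrightarrow> supp f \<subseteq> A \<Longrightarrow> f T = (\<Sum>s\<in>A. f s * delta s T :: 'a::field_char_0)"
proof -
  assume A: "finite A" "supp f \<subseteq> A"
  have "(\<Sum>s\<in>A. f s * delta s T) = (\<Sum>s\<in>A. if T = s then f s else 0)"
    by (rule sum.cong) (auto simp: delta_def)
  also have "\<dots> = (if T \<in> A then f T else 0)" using A(1) by simp
  also have "\<dots> = f T" using A(2) by auto
  finally show ?thesis by simp
qed

lemma fin_if[simp]: "fin (\<lambda>T. if T = S then 1 else (0::'a::field_char_0))"
  using fin_delta[of S] by (simp add: delta_def)

lemma subst_prodm:
  assumes ab: "vs a" "vs b" and fs: "\<forall>f\<in>set fs. fin f \<and> vs f"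
  shows "subst a b (prodm fs) = prodm (map (subst a b) fs :: 'a::field_char_0 ser list)"
proof
  fix T
  let ?A = "\<Union>f\<in>set fs. supp f"
  let ?n = "length fs"
  let ?L = "lists_of ?A ?n"
  let ?P = "\<lambda>ss. prod_list (map2 (\<lambda>f s. f s) fs ss) :: 'a"
  have A: "finite ?A" "\<forall>s\<in>?A. valid s" using fs by (auto simp: fin_def vs_def)
  have fsA: "\<forall>f\<in>set fs. \<forall>T. f T \<noteq> 0 \<longrightarrow> T \<in> ?A" by auto
  have L: "finite ?L" using A by (simp add: finite_lists_length_eq)
  have pe: "\<And>S. prodm fs S = (\<Sum>ss\<in>?L. ?P ss * delta (bullet ss) S)"
    by (rule prodm_supp[OF A fsA])
  have "subst a b (prodm fs) = subst a b (\<lambda>S. \<Sum>ss\<in>?L. ?P ss * delta (bullet ss) S)"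
    using pe by presburger
  also have "\<dots> = (\<lambda>T. \<Sum>ss\<in>?L. ?P ss * subst a b (delta (bullet ss)) T)"
    by (rule subst_lin[OF L]) simp
  finally have "subst a b (prodm fs) T = (\<Sum>ss\<in>?L. ?P ss * phi_tree a b (bullet ss) T)"
    by (simp add: subst_delta)
  also have "\<dots> = (\<Sum>ss\<in>?L. ?P ss * prodm (map (phi_tree a b) ss) T)"
  proof (rule sum.cong)
    fix ss assume "ss \<in> ?L"
    then have "\<forall>s\<in>set ss. valid s" using A by auto
    then show "?P ss * phi_tree a b (bullet ss) T = ?P ss * prodm (map (phi_tree a b) ss) T"
      using phi_bullet[OF ab] by simp
  qed simp
  also have "\<dots> = prodm (map (subst a b) fs) T"
  proof -
    have "prodm (map (subst a b) fs) T = (\<Sum>ss\<in>?L. (\<Prod>i<?n. (fs ! i) (ss ! i)) *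
            prodm (map (\<lambda>i. phi_tree a b (ss ! i)) [0..<?n]) T)"
    proof (rule prodm_multi[OF A(1)])
      show "length (map (subst a b) fs) = ?n" by simp
      fix i assume i: "i < ?n"
      have f1: "fin (fs ! i)" using fs i by auto
      have f2: "supp (fs ! i) \<subseteq> ?A" using nth_mem[OF i] by blast
      have "subst a b (fs ! i) = (\<lambda>T. \<Sum>s\<in>?A. (fs ! i) s * phi_tree a b s T)"
        by (rule ext, rule subst_expand[OF f1 A(1) f2])
      then show "map (subst a b) fs ! i = (\<lambda>T. \<Sum>s\<in>?A. (fs ! i) s * phi_tree a b s T)"
        using i by simp
    qed
    also have "\<dots> = (\<Sum>ss\<in>?L. ?P ss * prodm (map (phi_tree a b) ss) T)"
      by (rule sum.cong) (auto simp: prod_idx_list map_idx)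
    finally show ?thesis by simp
  qed
  finally show "subst a b (prodm fs) T = prodm (map (subst a b) fs) T" .
qed

lemma delta_same[simp]: "delta S S = 1" by (simp add: delta_def)

definition Dt :: "ptree \<Rightarrow> 'a::field_char_0 ser" where "Dt S = dx (delta S)"

lemma count_list_delta: "of_nat (count_list xs T) = sum_list (map (\<lambda>x. delta x T) xs :: 'a::field_char_0 list)"
  by (induction xs) (auto simp: delta_def)

lemma dser_expand:
  assumes "fin F" "finite A" "supp F \<subseteq> A"
  shows "dser F T = (\<Sum>S\<in>A. F S * of_nat (count_list (relabels S) T) :: 'a::field_char_0)"
  unfolding dser_def
proof (rule sum.mono_neutral_left)
  show "finite A" by fact
  show "{S. F S \<noteq> 0 \<and> T \<in> set (relabels S)} \<subseteq> A" using assms by auto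
  show "\<forall>i\<in>A - {S. F S \<noteq> 0 \<and> T \<in> set (relabels S)}. F i * of_nat (count_list (relabels i) T) = 0"
    by (auto simp: count_list_0_iff)
qed

lemma dser_delta: "dser (delta S) = (\<lambda>T. sum_list (map (\<lambda>x. delta x T) (relabels S)) :: 'a::field_char_0)"
proof
  fix T
  have "dser (delta S) T = (\<Sum>S'\<in>{S}. delta S S' * of_nat (count_list (relabels S') T) :: 'a)"
    by (rule dser_expand) (auto simp: delta_def)
  then show "dser (delta S) T = (sum_list (map (\<lambda>x. delta x T) (relabels S)) :: 'a)"
    by (simp add: count_list_delta delta_same)
qed

lemma sum_list_idx: "sum_list (map f xs) = (\<Sum>j<length xs. f (xs ! j))"
  by (simp add: sum_list_sum_nth atLeast0LessThan)

lemma Dt_relabels: "Dt S = (\<lambda>T. sum_list (map (\<lambda>t. phi_tree x_ser one_ser t T) (relabels S)) :: 'a::field_char_0)"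
proof -
  let ?xs = "relabels S"
  have "dser (delta S) = (\<lambda>T. \<Sum>j<length ?xs. 1 * delta (?xs ! j) T :: 'a)"
    unfolding dser_delta by (simp add: sum_list_idx)
  then have "Dt S = subst x_ser one_ser (\<lambda>T. \<Sum>j<length ?xs. 1 * delta (?xs ! j) T :: 'a)"
    by (simp add: Dt_def dx_def)
  also have "\<dots> = (\<lambda>T. \<Sum>j<length ?xs. 1 * subst x_ser one_ser (delta (?xs ! j)) T)"
    by (rule subst_lin) auto
  finally show ?thesis by (simp add: subst_delta sum_list_idx)
qed

lemma dx_expand:
  assumes F: "fin F" "finite A" "supp F \<subseteq> A"
  shows "dx F = (\<lambda>T. \<Sum>S\<in>A. F S * Dt S T :: 'a::field_char_0)"
proof -
  have "dser F = (\<lambda>T. \<Sum>S\<in>A. F S * dser (delta S) T)"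
  proof
    fix T
    show "dser F T = (\<Sum>S\<in>A. F S * dser (delta S) T)"
      unfolding dser_expand[OF F] dser_delta count_list_delta ..
  qed
  then have "dx F = subst x_ser one_ser (\<lambda>T. \<Sum>S\<in>A. F S * dser (delta S) T)" by (simp add: dx_def)
  also have "\<dots> = (\<lambda>T. \<Sum>S\<in>A. F S * subst x_ser one_ser (dser (delta S)) T)"
  proof (rule subst_lin[OF F(2)])
    show "\<forall>j\<in>A. fin (dser (delta j) :: 'a ser)"
    proof
      fix S
      have "supp (dser (delta S) :: 'a ser) \<subseteq> set (relabels S)"
        unfolding dser_delta count_list_delta[symmetric] by (auto simp: count_list_0_iff)
      then show "fin (dser (delta S) :: 'a ser)" unfolding fin_def by (rule finite_subset) simp
    qed
  qed
  finally show ?thesis by (simp add: Dt_def dx_def)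
qed

lemma dx_lin:
  assumes J: "finite J" "\<forall>j\<in>J. fin (G j)"
  shows "dx (\<lambda>T. \<Sum>j\<in>J. c j * G j T) = (\<lambda>T. \<Sum>j\<in>J. c j * dx (G j) T :: 'a::field_char_0)"
proof
  fix T
  let ?A = "\<Union>j\<in>J. supp (G j)"
  have A: "finite ?A" using J by (auto simp: fin_def)
  have sA: "supp (\<lambda>T. \<Sum>j\<in>J. c j * G j T) \<subseteq> ?A"
  proof
    fix T assume "T \<in> supp (\<lambda>T. \<Sum>j\<in>J. c j * G j T)"
    then have "(\<Sum>j\<in>J. c j * G j T) \<noteq> 0" by simp
    then obtain j where "j \<in> J" "c j * G j T \<noteq> 0" by (rule sum.not_neutral_contains_not_neutral)
    then show "T \<in> ?A" by auto
  qed
  have "dx (\<lambda>T. \<Sum>j\<in>J. c j * G j T) T = (\<Sum>S\<in>?A. (\<Sum>j\<in>J. c j * G j S) * Dt S T)"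
    using dx_expand[OF fin_sum[OF J] A sA] by simp
  also have "\<dots> = (\<Sum>j\<in>J. c j * (\<Sum>S\<in>?A. G j S * Dt S T))"
    by (simp add: sum_distrib_left sum_distrib_right mult.assoc sum.swap[of _ ?A])
  also have "\<dots> = (\<Sum>j\<in>J. c j * dx (G j) T)"
  proof (rule sum.cong)
    fix j assume j: "j \<in> J"
    have "dx (G j) = (\<lambda>T. \<Sum>S\<in>?A. G j S * Dt S T)"
      by (rule dx_expand) (use J j A in auto)
    then show "c j * (\<Sum>S\<in>?A. G j S * Dt S T) = c j * dx (G j) T" by simp
  qed simp
  finally show "dx (\<lambda>T. \<Sum>j\<in>J. c j * G j T) T = (\<Sum>j\<in>J. c j * dx (G j) T)" .
qed

lemma sum_list_concat': "sum_list (concat xss) = sum_list (map sum_list xss :: 'a::monoid_add list)"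
  by (induction xss) auto

lemma sum_list_upt: "sum_list (map f [0..<n]) = (\<Sum>i<n. f i :: 'a::comm_monoid_add)"
  by (simp add: interv_sum_list_conv_sum_set_nat atLeast0LessThan)

lemma relabelsl_eq:
  "relabelsl ts = concat (map (\<lambda>i. map (\<lambda>t'. ts[i := t']) (relabels (ts ! i))) [0..<length ts])"
proof (induction ts)
  case Nil then show ?case by simp
next
  case (Cons t ts)
  have "[0..<length (t # ts)] = 0 # map Suc [0..<length ts]"
    by (simp only: length_Cons) (simp add: map_Suc_upt upt_conv_Cons del: upt_Suc)
  then show ?case using Cons by (simp add: comp_def map_concat)
qed

lemma Dt_oneP: "Dt oneP = (\<lambda>_. 0 :: 'a::field_char_0)"
  by (simp add: Dt_relabels oneP_def)

lemma Dt_X: "Dt (Leaf X) = (one_ser :: 'a::field_char_0 ser)"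
  by (simp add: Dt_relabels fun_eq_iff)

lemma dx_x: "dx x_ser = (one_ser :: 'a::field_char_0 ser)"
  by (simp add: x_ser_delta Dt_def[symmetric] Dt_X)

lemma Dt_sum: "Dt S = (\<lambda>T. \<Sum>j<length (relabels S). 1 * phi_tree x_ser one_ser (relabels S ! j) T :: 'a::field_char_0)"
  by (simp add: Dt_relabels sum_list_idx)

lemma vs_x: "vs x_ser" and vs_one: "vs one_ser" and fin_x: "fin x_ser" and fin_one: "fin one_ser"
  and vs_y: "vs y_ser" and fin_y: "fin y_ser" and ax_x: "ax x_ser" and ax_one: "ax one_ser"
  by (simp_all add: x_ser_delta one_ser_delta y_ser_delta vs_delta ax_delta valid_def)

lemma Dt_fin: "fin (Dt S :: 'a::field_char_0 ser)"
  unfolding Dt_sum by (rule fin_sum) (auto intro: phi_fin vs_x vs_one fin_x fin_one)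

lemma vs_sum: "(\<forall>j\<in>J. vs (G j)) \<Longrightarrow> vs (\<lambda>T. \<Sum>j\<in>J. c j * G j T :: 'a::field_char_0)"
  unfolding vs_def by (metis (mono_tags, lifting) mult_zero_right sum.neutral)

lemma ax_sum: "(\<forall>j\<in>J. ax (G j)) \<Longrightarrow> ax (\<lambda>T. \<Sum>j\<in>J. c j * G j T :: 'a::field_char_0)"
  unfolding ax_def by (metis (mono_tags, lifting) mult_zero_right sum.neutral)

lemma Dt_vs: "vs (Dt S :: 'a::field_char_0 ser)"
  unfolding Dt_sum by (rule vs_sum) (auto intro: phi_vs vs_x vs_one)

lemma prod_upd: "i < n \<Longrightarrow> length fs = n \<Longrightarrow>
  (\<Prod>k<n. (fs[i := G] ! k) (ss ! k)) = G (ss ! i) * (\<Prod>k\<in>{..<n} - {i}. (fs ! k) (ss ! k) :: 'a::field_char_0)"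
proof -
  assume a: "i < n" "length fs = n"
  have "(\<Prod>k<n. (fs[i := G] ! k) (ss ! k)) = (fs[i := G] ! i) (ss ! i) * (\<Prod>k\<in>{..<n} - {i}. (fs[i := G] ! k) (ss ! k))"
    using a by (subst prod.remove[of _ i]) auto
  also have "\<dots> = G (ss ! i) * (\<Prod>k\<in>{..<n} - {i}. (fs ! k) (ss ! k))"
    using a by (auto intro!: prod.cong)
  finally show ?thesis .
qed

lemma prodm_slot:
  assumes i: "i < length fs" and J: "finite J"
  shows "prodm (fs[i := (\<lambda>T. \<Sum>j\<in>J. c j * g j T)]) T = (\<Sum>j\<in>J. c j * prodm (fs[i := g j]) T :: 'a::field_char_0)"
proof -
  let ?n = "length fs"
  let ?R = "\<lambda>ss. \<Prod>k\<in>{..<?n} - {i}. (fs ! k) (ss ! k) :: 'a"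
  have "prodm (fs[i := (\<lambda>T. \<Sum>j\<in>J. c j * g j T)]) T = (\<Sum>ss\<in>dec ?n T. (\<Sum>j\<in>J. c j * g j (ss ! i)) * ?R ss)"
    unfolding prodm_idx using i by (simp add: prod_upd)
  also have "\<dots> = (\<Sum>j\<in>J. c j * (\<Sum>ss\<in>dec ?n T. g j (ss ! i) * ?R ss))"
    by (simp add: sum_distrib_left sum_distrib_right mult.assoc sum.swap[of _ J])
  also have "\<dots> = (\<Sum>j\<in>J. c j * prodm (fs[i := g j]) T)"
    unfolding prodm_idx using i by (simp add: prod_upd)
  finally show ?thesis .
qed

lemma prodm_slot_list:
  assumes i: "i < length fs"
  shows "prodm (fs[i := (\<lambda>T. sum_list (map (\<lambda>x. g x T) xs))]) T = sum_list (map (\<lambda>x. prodm (fs[i := g x]) T) xs :: 'a::field_char_0 list)"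
proof -
  have "prodm (fs[i := (\<lambda>T. sum_list (map (\<lambda>x. g x T) xs))]) T = prodm (fs[i := (\<lambda>T. \<Sum>j<length xs. 1 * g (xs ! j) T)]) T"
    by (simp add: sum_list_idx)
  also have "\<dots> = (\<Sum>j<length xs. 1 * prodm (fs[i := g (xs ! j)]) T)"
    by (rule prodm_slot[OF i]) simp
  finally show ?thesis by (simp add: sum_list_idx)
qed

lemma Dt_node:
  assumes ax: "allx (Node ts)" and v: "\<forall>t\<in>set ts. valid t"
  shows "Dt (Node ts) = (\<lambda>T. \<Sum>i<length ts. prodm ((map delta ts)[i := Dt (ts ! i)]) T :: 'a::field_char_0)"
proof
  fix T
  let ?phi = "phi_tree x_ser one_ser :: ptree \<Rightarrow> 'a ser"
  have md: "map ?phi ts = map delta ts" using ax v by (auto intro: phi_x)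
  have "Dt (Node ts) T = sum_list (map (\<lambda>t. ?phi t T) (map Node (relabelsl ts)))"
    by (simp add: Dt_relabels)
  also have "\<dots> = (\<Sum>i<length ts. sum_list (map (\<lambda>t'. ?phi (Node (ts[i := t'])) T) (relabels (ts ! i))))"
    unfolding relabelsl_eq by (simp add: map_concat sum_list_concat' comp_def sum_list_upt)
  also have "\<dots> = (\<Sum>i<length ts. sum_list (map (\<lambda>t'. prodm ((map delta ts)[i := ?phi t']) T) (relabels (ts ! i))))"
    by (simp add: map_update md)
  also have "\<dots> = (\<Sum>i<length ts. prodm ((map delta ts)[i := Dt (ts ! i)]) T)"
  proof (rule sum.cong)
    fix i assume "i \<in> {..<length ts}"
    then have i: "i < length (map delta ts)" by simp
    show "sum_list (map (\<lambda>t'. prodm ((map delta ts)[i := ?phi t']) T) (relabels (ts ! i))) =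
          prodm ((map delta ts)[i := Dt (ts ! i)]) T"
      unfolding Dt_relabels by (rule prodm_slot_list[OF i, symmetric])
  qed simp
  finally show "Dt (Node ts) T = (\<Sum>i<length ts. prodm ((map delta ts)[i := Dt (ts ! i)]) T :: 'a)" .
qed

lemma Dt_shift: "(\<Sum>i<length (s # ss). prodm (A @ (map delta (s # ss))[i := Dt ((s # ss) ! i)]) T) =
        prodm (A @ Dt s # map delta ss) T + (\<Sum>i<length ss. prodm ((A @ [delta s]) @ (map delta ss)[i := Dt (ss ! i)]) T :: 'a::field_char_0)"
  by (simp only: length_Cons sum.lessThan_Suc_shift) simp

lemma Dt_fil:
  "(\<Sum>i<length ss. prodm (A @ (map delta ss)[i := Dt (ss ! i)]) T) =
   (\<Sum>i<length (fil ss). prodm (A @ (map delta (fil ss))[i := Dt (fil ss ! i)]) T :: 'a::field_char_0)"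
proof (induction ss arbitrary: A)
  case Nil then show ?case by simp
next
  case (Cons s ss)
  have sh: "(\<Sum>i<length (s # ss). prodm (A @ (map delta (s # ss))[i := Dt ((s # ss) ! i)]) T) =
        prodm (A @ Dt s # map delta ss) T + (\<Sum>i<length ss. prodm ((A @ [delta s]) @ (map delta ss)[i := Dt (ss ! i)]) T :: 'a)"
    by (rule Dt_shift)
  show ?case
  proof (cases "s = oneP")
    case True
    have "prodm (A @ Dt s # map delta ss) T = (0::'a)"
      using True prodm_zero[of A "map delta ss"] by (simp add: Dt_oneP)
    moreover have "\<And>i. prodm ((A @ [delta s]) @ (map delta ss)[i := Dt (ss ! i)]) T = (prodm (A @ (map delta ss)[i := Dt (ss ! i)]) T :: 'a)"
      using True by (simp add: one_ser_delta[symmetric] prodm_unit)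
    ultimately show ?thesis using sh Cons[of A] True by simp
  next
    case False
    have "(\<Sum>i<length (fil (s # ss)). prodm (A @ (map delta (fil (s # ss)))[i := Dt (fil (s # ss) ! i)]) T) =
        prodm (A @ Dt s # map delta (fil ss)) T + (\<Sum>i<length (fil ss). prodm ((A @ [delta s]) @ (map delta (fil ss))[i := Dt (fil ss ! i)]) T :: 'a)"
      using False Dt_shift[where s=s and ss="fil ss" and A=A and T=T] by simp
    moreover have "prodm (A @ Dt s # map delta ss) T = (prodm (A @ Dt s # map delta (fil ss)) T :: 'a)"
      using prodm_fil[of delta "A @ [Dt s]" ss] by (simp add: one_ser_delta)
    ultimately show ?thesis using sh Cons[of "A @ [delta s]"] by simp
  qed
qed

lemma Dt_bullet:
  assumes v: "\<forall>s\<in>set ss. valid s \<and> allx s"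
  shows "Dt (bullet ss) = (\<lambda>T. \<Sum>i<length ss. prodm ((map delta ss)[i := Dt (ss ! i)]) T :: 'a::field_char_0)"
proof
  fix T
  have f: "(\<Sum>i<length ss. prodm ((map delta ss)[i := Dt (ss ! i)]) T) =
     (\<Sum>i<length (fil ss). prodm ((map delta (fil ss))[i := Dt (fil ss ! i)]) T :: 'a)"
    using Dt_fil[of "[]" ss T] by simp
  show "Dt (bullet ss) T = (\<Sum>i<length ss. prodm ((map delta ss)[i := Dt (ss ! i)]) T :: 'a)"
  proof (cases ss rule: bullet_cases)
    case 1 then show ?thesis using f by (simp add: Dt_oneP)
  next
    case (2 t) then show ?thesis using f by (simp add: prodm_single_vs[OF Dt_vs])
  next
    case 3
    have "allx (Node (fil ss))" "\<forall>t\<in>set (fil ss). valid t" using v by auto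
    then show ?thesis using f 3 by (simp add: Dt_node)
  qed
qed

lemma dx_prodm:
  assumes fs: "\<forall>f\<in>set fs. fin f \<and> vs f \<and> ax f"
  shows "dx (prodm fs) = (\<lambda>T. \<Sum>i<length fs. prodm (fs[i := dx (fs ! i)]) T :: 'a::field_char_0)"
proof
  fix T
  let ?A = "\<Union>f\<in>set fs. supp f"
  let ?n = "length fs"
  let ?L = "lists_of ?A ?n"
  let ?P = "\<lambda>ss. prod_list (map2 (\<lambda>f s. f s) fs ss) :: 'a"
  have A: "finite ?A" "\<forall>s\<in>?A. valid s" "\<forall>s\<in>?A. allx s" using fs by (auto simp: fin_def vs_def ax_def)
  have fsA: "\<forall>f\<in>set fs. \<forall>T. f T \<noteq> 0 \<longrightarrow> T \<in> ?A" by auto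
  have L: "finite ?L" using A by (simp add: finite_lists_length_eq)
  have pe: "prodm fs = (\<lambda>S. \<Sum>ss\<in>?L. ?P ss * delta (bullet ss) S)"
    by (rule ext, rule prodm_supp[OF A(1,2) fsA])
  have "dx (prodm fs) T = (\<Sum>ss\<in>?L. ?P ss * dx (delta (bullet ss)) T)"
    unfolding pe by (subst dx_lin[OF L]) auto
  also have "\<dots> = (\<Sum>ss\<in>?L. ?P ss * (\<Sum>i<?n. prodm ((map delta ss)[i := Dt (ss ! i)]) T))"
  proof (rule sum.cong)
    fix ss assume ss: "ss \<in> ?L"
    then have "\<forall>s\<in>set ss. valid s \<and> allx s" using A by auto
    then show "?P ss * dx (delta (bullet ss)) T = ?P ss * (\<Sum>i<?n. prodm ((map delta ss)[i := Dt (ss ! i)]) T)"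
      using ss by (simp add: Dt_def[symmetric] Dt_bullet)
  qed simp
  also have "\<dots> = (\<Sum>i<?n. \<Sum>ss\<in>?L. ?P ss * prodm ((map delta ss)[i := Dt (ss ! i)]) T)"
    by (simp add: sum_distrib_left sum.swap[of _ ?L])
  also have "\<dots> = (\<Sum>i<?n. prodm (fs[i := dx (fs ! i)]) T)"
  proof (rule sum.cong)
    fix i assume "i \<in> {..<?n}"
    then have i: "i < ?n" by simp
    define G where "G = (\<lambda>k s. if k = i then Dt s else (delta s :: 'a ser))"
    have "prodm (fs[i := dx (fs ! i)]) T = (\<Sum>ss\<in>?L. (\<Prod>k<?n. (fs ! k) (ss ! k)) * prodm (map (\<lambda>k. G k (ss ! k)) [0..<?n]) T)"
    proof (rule prodm_multi[OF A(1)])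
      show "length (fs[i := dx (fs ! i)]) = ?n" by simp
      fix k assume k: "k < ?n"
      have f1: "fin (fs ! k)" using fs k by auto
      have f2: "supp (fs ! k) \<subseteq> ?A" using nth_mem[OF k] by blast
      show "fs[i := dx (fs ! i)] ! k = (\<lambda>T. \<Sum>s\<in>?A. (fs ! k) s * G k s T)"
      proof (cases "k = i")
        case True
        then show ?thesis using k dx_expand[OF f1 A(1) f2] by (simp add: G_def)
      next
        case False
        have "fs ! k = (\<lambda>T. \<Sum>s\<in>?A. (fs ! k) s * delta s T)"
          by (rule ext, rule ser_delta_expand[OF A(1) f2])
        then show ?thesis using k False by (simp add: G_def)
      qed
    qed
    also have "\<dots> = (\<Sum>ss\<in>?L. ?P ss * prodm ((map delta ss)[i := Dt (ss ! i)]) T)"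
    proof (rule sum.cong)
      fix ss assume "ss \<in> ?L"
      then have l: "length ss = ?n" by simp
      have "map (\<lambda>k. G k (ss ! k)) [0..<?n] = (map delta ss)[i := Dt (ss ! i)]"
        using l i by (intro nth_equalityI) (auto simp: G_def nth_list_update)
      then show "(\<Prod>k<?n. (fs ! k) (ss ! k)) * prodm (map (\<lambda>k. G k (ss ! k)) [0..<?n]) T =
                 ?P ss * prodm ((map delta ss)[i := Dt (ss ! i)]) T"
        using l by (simp add: prod_idx_list)
    qed simp
    finally show "(\<Sum>ss\<in>?L. ?P ss * prodm ((map delta ss)[i := Dt (ss ! i)]) T) = prodm (fs[i := dx (fs ! i)]) T" by simp
  qed simp
  finally show "dx (prodm fs) T = (\<Sum>i<?n. prodm (fs[i := dx (fs ! i)]) T)" .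
qed

lemma sum_list_update_nat: "i < length xs \<Longrightarrow> sum_list (xs[i := v]) + xs ! i = sum_list xs + (v::nat)"
proof (induction xs arbitrary: i)
  case Nil then show ?case by simp
next
  case (Cons x xs) then show ?case by (cases i) auto
qed

lemma Dt_props:
  "allx S \<Longrightarrow> valid S \<Longrightarrow> (Dt S T :: 'a::field_char_0) \<noteq> 0 \<Longrightarrow> allx T \<and> nleaves T + 1 = nleaves S"
proof (induction S arbitrary: T)
  case (Leaf a)
  then have "a = X" by simp
  then show ?case using Leaf by (auto simp: Dt_X one_ser_def split: if_splits)
next
  case (Node ts)
  show ?case
  proof (cases "ts = []")
    case True then show ?thesis using Node.prems by (simp add: oneP_def[symmetric] Dt_oneP)
  next
    case False
    then have r: "reduced (Node ts)" using Node.prems by (auto simp: valid_def oneP_def)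
    then have vts: "\<forall>t\<in>set ts. valid t" by (auto simp: valid_def)
    have "(\<Sum>i<length ts. prodm ((map delta ts)[i := Dt (ts ! i)]) T :: 'a) \<noteq> 0"
      using Node.prems Dt_node[OF Node.prems(1) vts] by metis
    then obtain i where i: "i < length ts" "prodm ((map delta ts)[i := Dt (ts ! i)]) T \<noteq> (0::'a)"
      by (rule sum.not_neutral_contains_not_neutral) simp
    then obtain ss where ss: "ss \<in> dec (length ts) T"
      "\<forall>k<length ts. (((map delta ts)[i := Dt (ts ! i)]) ! k) (ss ! k) \<noteq> (0::'a)"
      using prodm_nz by fastforce
    have l: "length ss = length ts" using dec_len[OF ss(1)] .
    have o: "\<And>k. k < length ts \<Longrightarrow> k \<noteq> i \<Longrightarrow> ss ! k = ts ! k"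
      using ss(2) by (fastforce simp: delta_def split: if_splits)
    have di: "(Dt (ts ! i) (ss ! i) :: 'a) \<noteq> 0" using ss(2) i by auto
    have ti: "ts ! i \<in> set ts" using i by simp
    have ih: "allx (ss ! i) \<and> nleaves (ss ! i) + 1 = nleaves (ts ! i)"
      using Node.IH[OF ti _ _ di] Node.prems vts ti by auto
    have sseq: "ss = ts[i := ss ! i]"
    proof (rule nth_equalityI)
      show "length ss = length (ts[i := ss ! i])" using l by simp
      fix k assume "k < length ss"
      then show "ss ! k = ts[i := ss ! i] ! k" using l o by (cases "k = i") auto
    qed
    have T: "T = bullet ss" using dec_bullet[OF ss(1)] by simp
    have "\<forall>s\<in>set ss. allx s"
    proof
      fix s assume "s \<in> set ss"
      then obtain k where k: "k < length ss" "ss ! k = s" by (auto simp: in_set_conv_nth)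
      show "allx s"
      proof (cases "k = i")
        case True then show ?thesis using ih k by simp
      next
        case False then show ?thesis using o k l Node.prems(1) by (metis allx.simps(2) nth_mem)
      qed
    qed
    then have "allx T" using T allx_bullet by simp
    moreover have "nleaves T + 1 = nleaves (Node ts)"
    proof -
      have "nleaves T = sum_list ((map nleaves ts)[i := nleaves (ss ! i)])"
        using T nleaves_bullet sseq by (metis map_update)
      then have "nleaves T + nleaves (ts ! i) = sum_list (map nleaves ts) + nleaves (ss ! i)"
        using sum_list_update_nat[of i "map nleaves ts" "nleaves (ss ! i)"] i by simp
      then show ?thesis using ih by simp
    qed
    ultimately show ?thesis by simp
  qed
qed

definition eqlow :: "nat \<Rightarrow> 'a ser \<Rightarrow> 'a ser \<Rightarrow> bool" where
  "eqlow K F G \<longleftrightarrow> (\<forall>T. nleaves T < K \<longrightarrow> F T = G T)"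

definition low1 :: "'a::zero ser \<Rightarrow> bool" where
  "low1 a \<longleftrightarrow> (\<forall>T. a T \<noteq> 0 \<longrightarrow> 1 \<le> nleaves T)"

lemma dec_nleaves: "ss \<in> dec m T \<Longrightarrow> i < length ss \<Longrightarrow> nleaves (ss ! i) \<le> nleaves T"
proof -
  assume a: "ss \<in> dec m T" "i < length ss"
  have "nleaves (ss ! i) \<le> sum_list (map nleaves ss)"
    using a(2) by (intro member_le_sum_list) auto
  then show ?thesis using nleaves_bullet[of ss] dec_bullet[OF a(1)] by simp
qed

lemma prodm_loc:
  assumes l: "length gs = length fs"
    and e: "\<forall>i<length fs. \<forall>s. nleaves s \<le> nleaves T \<longrightarrow> (fs ! i) s = (gs ! i) s"
  shows "prodm fs T = (prodm gs T :: 'a::field_char_0)"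
  unfolding prodm_idx l
proof (rule sum.cong[OF refl], rule prod.cong[OF refl])
  fix ss i assume ss: "ss \<in> dec (length fs) T" and i: "i \<in> {..<length fs}"
  then have "nleaves (ss ! i) \<le> nleaves T" using dec_nleaves dec_len by fastforce
  then show "(fs ! i) (ss ! i) = (gs ! i) (ss ! i)" using e i by auto
qed

lemma low1_y: "low1 y_ser" and low1_x: "low1 x_ser"
  by (auto simp: low1_def y_ser_def x_ser_def)

lemma sum_list_le_idx:
  assumes "length ys = length xs" "\<forall>i<length xs. f (xs ! i) \<le> (g (ys ! i) :: nat)"
  shows "sum_list (map f xs) \<le> sum_list (map g ys)"
  unfolding sum_list_idx length_map using assms by (auto intro!: sum_mono)

lemma phi_low:
  assumes a: "low1 a" and b: "low1 b"
  shows "phi_tree a b S T \<noteq> (0::'a::field_char_0) \<Longrightarrow> nleaves S \<le> nleaves T"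
proof (induction S arbitrary: T)
  case (Leaf x) then show ?case using a b by (auto simp: low1_def split: if_splits)
next
  case (Node ts)
  then have "prodm (map (phi_tree a b) ts) T \<noteq> 0" by simp
  then obtain ss where ss: "ss \<in> dec (length ts) T" "\<forall>i<length ts. (map (phi_tree a b) ts ! i) (ss ! i) \<noteq> (0::'a)"
    using prodm_nz by fastforce
  have l: "length ss = length ts" using dec_len[OF ss(1)] .
  have "\<forall>i<length ts. nleaves (ts ! i) \<le> nleaves (ss ! i)"
    using ss(2) Node.IH by (metis nth_map nth_mem)
  then have "sum_list (map nleaves ts) \<le> sum_list (map nleaves ss)"
    using l by (intro sum_list_le_idx) auto
  then show ?case using nleaves_bullet[of ss] dec_bullet[OF ss(1)] by simp
qed

lemma list_eq_le_sum:
  "length ys = length xs \<Longrightarrow> \<forall>i<length xs. xs ! i \<le> (ys ! i :: nat) \<Longrightarrow> sum_list xs = sum_list ys \<Longrightarrow> xs = ys"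
proof (induction xs arbitrary: ys)
  case Nil then show ?case by simp
next
  case (Cons x xs)
  then obtain y ys' where y: "ys = y # ys'" by (cases ys) auto
  have "x \<le> y" using Cons.prems y by force
  moreover have "\<forall>i<length xs. xs ! i \<le> ys' ! i" using Cons.prems y by force
  moreover then have "sum_list xs \<le> sum_list ys'"
    using Cons.prems y by (intro sum_list_le_idx[where f=id and g=id, simplified]) auto
  ultimately have "x = y" "sum_list xs = sum_list ys'" using Cons.prems y by auto
  then show ?case using Cons y \<open>\<forall>i<length xs. xs ! i \<le> ys' ! i\<close> by auto
qed

lemma phi_lowest:
  assumes a: "low1 a" "\<forall>T. nleaves T = 1 \<longrightarrow> a T = x_ser T" and b: "low1 b"
  shows "allx S \<Longrightarrow> valid S \<Longrightarrow> nleaves T = nleaves S \<Longrightarrow> phi_tree a b S T = (delta S T :: 'a::field_char_0)"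
proof (induction S arbitrary: T)
  case (Leaf x)
  then show ?case using a by (simp add: x_ser_def delta_def)
next
  case (Node ts)
  show ?case
  proof (cases "ts = []")
    case True then show ?thesis by (simp add: prodm_nil one_ser_def delta_def oneP_def)
  next
    case False
    then have r: "reduced (Node ts)" using Node.prems by (auto simp: valid_def oneP_def)
    then have vts: "\<forall>t\<in>set ts. valid t \<and> t \<noteq> oneP" "2 \<le> length ts" by (auto simp: valid_def)
    have axts: "\<forall>t\<in>set ts. allx t" using Node.prems by simp
    let ?f = "\<lambda>ss. \<Prod>i<length ts. (map (phi_tree a b) ts ! i) (ss ! i) :: 'a"
    have z: "?f ss = (if ss = ts then ?f ts else 0)" if ss: "ss \<in> dec (length ts) T" for ss
    proof (cases "?f ss = 0")
      case True then show ?thesis by auto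
    next
      case False
      then have nz: "\<forall>i<length ts. phi_tree a b (ts ! i) (ss ! i) \<noteq> 0"
        by (metis (no_types, lifting) finite_lessThan lessThan_iff nth_map prod_zero_iff)
      have l: "length ss = length ts" using dec_len[OF ss] .
      have le: "\<forall>i<length ts. nleaves (ts ! i) \<le> nleaves (ss ! i)"
        using nz phi_low[OF a(1) b] by blast
      have "sum_list (map nleaves ts) = sum_list (map nleaves ss)"
        using Node.prems(3) nleaves_bullet[of ss] dec_bullet[OF ss] by simp
      then have "map nleaves ts = map nleaves ss"
        using le l by (intro list_eq_le_sum) auto
      then have eqn: "\<forall>i<length ts. nleaves (ss ! i) = nleaves (ts ! i)"
        by (metis nth_map l)
      have "\<forall>i<length ts. ss ! i = ts ! i"
      proof (intro allI impI)
        fix i assume i: "i < length ts"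
        have "phi_tree a b (ts ! i) (ss ! i) = delta (ts ! i) (ss ! i)"
          using Node.IH[of "ts ! i" "ss ! i"] i axts vts eqn by simp
        then show "ss ! i = ts ! i" using nz i by (auto simp: delta_def split: if_splits)
      qed
      then have "ss = ts" using l by (intro nth_equalityI) auto
      then show ?thesis by simp
    qed
    have one: "?f ts = 1"
    proof -
      have "\<forall>i<length ts. phi_tree a b (ts ! i) (ts ! i) = 1"
        using Node.IH axts vts by (simp add: delta_def)
      then show ?thesis by simp
    qed
    have "phi_tree a b (Node ts) T = (\<Sum>ss\<in>dec (length ts) T. ?f ss)"
      by (simp add: prodm_idx)
    also have "\<dots> = (\<Sum>ss\<in>dec (length ts) T. if ss = ts then ?f ts else 0)"
      using z by (intro sum.cong) auto
    also have "\<dots> = (if ts \<in> dec (length ts) T then 1 else 0)"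
      using one finite_dec by (simp add: sum.delta')
    also have "\<dots> = delta (Node ts) T"
      using vts bullet_no_oneP[of ts] by (auto simp: dec_def delta_def)
    finally show ?thesis .
  qed
qed

lemma phi_loc:
  "\<forall>s. nleaves s \<le> nleaves T \<longrightarrow> a s = a' s \<Longrightarrow> phi_tree a b S T = (phi_tree a' b S T :: 'a::field_char_0)"
proof (induction S arbitrary: T)
  case (Leaf x) then show ?case by auto
next
  case (Node ts)
  have "prodm (map (phi_tree a b) ts) T = prodm (map (phi_tree a' b) ts) T"
  proof (rule prodm_loc)
    show "length (map (phi_tree a' b) ts) = length (map (phi_tree a b) ts)" by simp
    show "\<forall>i<length (map (phi_tree a b) ts). \<forall>s. nleaves s \<le> nleaves T \<longrightarrow>
            (map (phi_tree a b) ts ! i) s = (map (phi_tree a' b) ts ! i) s"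
    proof (intro allI impI)
      fix i s assume i: "i < length (map (phi_tree a b) ts)" and s: "nleaves s \<le> nleaves T"
      have "\<forall>s'. nleaves s' \<le> nleaves s \<longrightarrow> a s' = a' s'" using Node.prems s by auto
      then show "(map (phi_tree a b) ts ! i) s = (map (phi_tree a' b) ts ! i) s"
        using Node.IH[of "ts ! i" s] i by simp
    qed
  qed
  then show ?case by simp
qed

lemma subst_fin: "fin F \<Longrightarrow> fin a \<Longrightarrow> fin b \<Longrightarrow> vs a \<Longrightarrow> vs b \<Longrightarrow> fin (subst a b F :: 'a::field_char_0 ser)"
proof -
  assume F: "fin F" and ab: "fin a" "fin b" "vs a" "vs b"
  have "subst a b F = (\<lambda>T. \<Sum>S\<in>supp F. F S * phi_tree a b S T)"
    using F by (intro ext subst_expand) (auto simp: fin_def)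
  moreover have "fin (\<lambda>T. \<Sum>S\<in>supp F. F S * phi_tree a b S T)"
  proof (rule fin_sum)
    show "finite (supp F)" using F by (simp add: fin_def)
    show "\<forall>j\<in>supp F. fin (phi_tree a b j)" using ab phi_fin by blast
  qed
  ultimately show ?thesis by simp
qed

lemma subst_vs: "fin F \<Longrightarrow> vs a \<Longrightarrow> vs b \<Longrightarrow> vs (subst a b F :: 'a::field_char_0 ser)"
proof -
  assume F: "fin F" and ab: "vs a" "vs b"
  have "subst a b F = (\<lambda>T. \<Sum>S\<in>supp F. F S * phi_tree a b S T)"
    using F by (intro ext subst_expand) (auto simp: fin_def)
  moreover have "vs (\<lambda>T. \<Sum>S\<in>supp F. F S * phi_tree a b S T)"
    using ab by (intro vs_sum) (auto intro: phi_vs)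
  ultimately show ?thesis by simp
qed

lemma subst_ax: "fin F \<Longrightarrow> ax F \<Longrightarrow> ax a \<Longrightarrow> ax (subst a b F :: 'a::field_char_0 ser)"
proof -
  assume F: "fin F" "ax F" and a: "ax a"
  have "subst a b F = (\<lambda>T. \<Sum>S\<in>supp F. F S * phi_tree a b S T)"
    using F by (intro ext subst_expand) (auto simp: fin_def)
  moreover have "ax (\<lambda>T. \<Sum>S\<in>supp F. F S * phi_tree a b S T)"
  proof (rule ax_sum, rule ballI)
    fix S assume "S \<in> supp F"
    then have "allx S" using F by (auto simp: ax_def)
    then show "ax (phi_tree a b S)" using phi_ax[OF a] by blast
  qed
  ultimately show ?thesis by simp
qed

lemma dx_fin: "fin F \<Longrightarrow> fin (dx F :: 'a::field_char_0 ser)"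
proof -
  assume F: "fin F"
  have "dx F = (\<lambda>T. \<Sum>S\<in>supp F. F S * Dt S T)" using F by (intro dx_expand) (auto simp: fin_def)
  moreover have "fin (\<lambda>T. \<Sum>S\<in>supp F. F S * Dt S T :: 'a)"
  proof (rule fin_sum)
    show "finite (supp F)" using F by (simp add: fin_def)
  qed (simp add: Dt_fin)
  ultimately show ?thesis by simp
qed

lemma dx_vs: "fin F \<Longrightarrow> vs (dx F :: 'a::field_char_0 ser)"
proof -
  assume F: "fin F"
  have "dx F = (\<lambda>T. \<Sum>S\<in>supp F. F S * Dt S T)" using F by (intro dx_expand) (auto simp: fin_def)
  moreover have "vs (\<lambda>T. \<Sum>S\<in>supp F. F S * Dt S T :: 'a)" by (intro vs_sum) (auto simp: Dt_vs)
  ultimately show ?thesis by simp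
qed

lemma dx_props:
  assumes F: "fin F" "vs F" "ax F" and nz: "dx F T \<noteq> (0::'a::field_char_0)"
  shows "allx T \<and> (\<exists>S. F S \<noteq> 0 \<and> nleaves S = nleaves T + 1)"
proof -
  have "dx F = (\<lambda>T. \<Sum>S\<in>supp F. F S * Dt S T)" using F by (intro dx_expand) (auto simp: fin_def)
  then have "(\<Sum>S\<in>supp F. F S * Dt S T) \<noteq> 0" using nz by metis
  then obtain S where S: "S \<in> supp F" "F S * Dt S T \<noteq> 0" by (rule sum.not_neutral_contains_not_neutral)
  then have "allx S" "valid S" using F by (auto simp: vs_def ax_def)
  then have "allx T \<and> nleaves T + 1 = nleaves S" using Dt_props S by auto
  then show ?thesis using S by auto
qed

lemma dx_ax: "fin F \<Longrightarrow> vs F \<Longrightarrow> ax F \<Longrightarrow> ax (dx F :: 'a::field_char_0 ser)"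
  using dx_props unfolding ax_def by blast

lemma tri:
  assumes a: "low1 a" "\<forall>T. nleaves T = 1 \<longrightarrow> a T = x_ser T"
    and F: "fin F" "vs F" "ax F"
    and z: "\<forall>T. nleaves T < K \<longrightarrow> subst a y_ser F T = (0::'a::field_char_0)"
  shows "\<forall>T. nleaves T < K \<longrightarrow> F T = 0"
proof -
  have "\<forall>T. nleaves T = m \<longrightarrow> m < K \<longrightarrow> F T = 0" for m
  proof (induction m rule: less_induct)
    case (less m)
    show ?case
    proof (intro allI impI)
      fix T assume T: "nleaves T = m" "m < K"
      have fA: "finite (supp F)" using F by (simp add: fin_def)
      have "subst a y_ser F T = (\<Sum>S\<in>supp F. F S * phi_tree a y_ser S T)"
        using F fA by (intro subst_expand) auto
      also have "\<dots> = (\<Sum>S\<in>supp F. F S * delta S T)"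
      proof (rule sum.cong[OF refl])
        fix S assume S: "S \<in> supp F"
        then have vS: "valid S" "allx S" using F by (auto simp: vs_def ax_def)
        have ge: "m \<le> nleaves S"
        proof (rule ccontr)
          assume "\<not> m \<le> nleaves S"
          then have "F S = 0" using less.IH[of "nleaves S"] T by auto
          then show False using S by simp
        qed
        show "F S * phi_tree a y_ser S T = F S * delta S T"
        proof (cases "nleaves S = m")
          case True
          then show ?thesis using phi_lowest[OF a low1_y vS(2,1)] T by simp
        next
          case False
          then have "nleaves T < nleaves S" using ge T by simp
          then have "phi_tree a y_ser S T = 0" using phi_low[OF a(1) low1_y] by force
          moreover have "(delta S T :: 'a) = 0" using \<open>nleaves T < nleaves S\<close> by (auto simp: delta_def)
          ultimately show ?thesis by simp
        qed
      qed
      also have "\<dots> = F T" using fA by (rule ser_delta_expand[symmetric]) simp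
      finally show "F T = 0" using z T by simp
    qed
  qed
  then show ?thesis by blast
qed

lemma subst_eqlow:
  assumes a: "low1 a" and F: "fin F" "fin G" and e: "eqlow K F G"
  shows "eqlow K (subst a y_ser F) (subst a y_ser G :: 'a::field_char_0 ser)"
  unfolding eqlow_def
proof (intro allI impI)
  fix T assume T: "nleaves T < K"
  let ?A = "supp F \<union> supp G"
  have fA: "finite ?A" using F by (simp add: fin_def)
  have "subst a y_ser F T = (\<Sum>S\<in>?A. F S * phi_tree a y_ser S T)"
    using F fA by (intro subst_expand) auto
  also have "\<dots> = (\<Sum>S\<in>?A. G S * phi_tree a y_ser S T)"
  proof (rule sum.cong[OF refl])
    fix S
    show "F S * phi_tree a y_ser S T = G S * phi_tree a y_ser S T"
    proof (cases "phi_tree a y_ser S T = (0::'a)")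
      case False
      then have "nleaves S \<le> nleaves T" using phi_low[OF a low1_y] by blast
      then show ?thesis using e T by (simp add: eqlow_def)
    qed simp
  qed
  also have "\<dots> = subst a y_ser G T"
    using F fA by (intro subst_expand[symmetric]) auto
  finally show "subst a y_ser F T = subst a y_ser G T" .
qed

lemma dx_eqlow:
  assumes F: "fin F" "vs F" "ax F" and G: "fin G" "vs G" "ax G" and e: "eqlow (Suc K) F G"
  shows "eqlow K (dx F) (dx G :: 'a::field_char_0 ser)"
  unfolding eqlow_def
proof (intro allI impI)
  fix T assume T: "nleaves T < K"
  let ?A = "supp F \<union> supp G"
  have fA: "finite ?A" using F G by (simp add: fin_def)
  have "dx F T = (\<Sum>S\<in>?A. F S * Dt S T)"
    using dx_expand[OF F(1) fA] by auto
  also have "\<dots> = (\<Sum>S\<in>?A. G S * Dt S T)"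
  proof (rule sum.cong[OF refl])
    fix S assume S: "S \<in> ?A"
    then have vS: "valid S" "allx S" using F G by (auto simp: vs_def ax_def)
    show "F S * Dt S T = G S * Dt S T"
    proof (cases "Dt S T = (0::'a)")
      case False
      then have "nleaves T + 1 = nleaves S" using Dt_props[OF vS(2,1)] by blast
      then show ?thesis using e T by (simp add: eqlow_def)
    qed simp
  qed
  also have "\<dots> = dx G T"
    using dx_expand[OF G(1) fA] by auto
  finally show "dx F T = dx G T" .
qed

lemma prodm_eqlow:
  assumes e: "eqlow K f g"
  shows "eqlow K (prodm (fs[i := f])) (prodm (fs[i := g]) :: 'a::field_char_0 ser)"
  unfolding eqlow_def
proof (intro allI impI)
  fix T assume T: "nleaves T < K"
  show "prodm (fs[i := f]) T = prodm (fs[i := g]) T"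
  proof (rule prodm_loc)
    show "length (fs[i := g]) = length (fs[i := f])" by simp
    show "\<forall>j<length (fs[i := f]). \<forall>s. nleaves s \<le> nleaves T \<longrightarrow> (fs[i := f] ! j) s = (fs[i := g] ! j) s"
    proof (intro allI impI)
      fix j s assume j: "j < length (fs[i := f])" and s: "nleaves s \<le> nleaves T"
      show "(fs[i := f] ! j) s = (fs[i := g] ! j) s"
        using e T s j by (cases "j = i") (auto simp: eqlow_def)
    qed
  qed
qed

lemma dx_scale: "fin F \<Longrightarrow> dx (\<lambda>T. c * F T) = (\<lambda>T. c * dx F T :: 'a::field_char_0)"
  using dx_lin[of "{()}" "\<lambda>_. F" "\<lambda>_. c"] by simp

lemma dx_one: "dx one_ser = (\<lambda>_. 0 :: 'a::field_char_0)"
  by (simp add: one_ser_delta Dt_def[symmetric] Dt_oneP)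

lemma prodm_upd_zero: "i < length fs \<Longrightarrow> prodm (fs[i := (\<lambda>_. 0)]) = (\<lambda>_. 0 :: 'a::field_char_0)"
  by (simp add: upd_conv_take_nth_drop prodm_zero)

lemma prodm_slot_add: "i < length fs \<Longrightarrow>
  prodm (fs[i := (\<lambda>T. g T + h T)]) T = prodm (fs[i := g]) T + (prodm (fs[i := h]) T :: 'a::field_char_0)"
proof -
  assume i: "i < length fs"
  have "prodm (fs[i := (\<lambda>T. g T + h T)]) T = prodm (fs[i := (\<lambda>T. \<Sum>j\<in>{True, False}. 1 * (if j then g else h) T)]) T"
    by simp
  also have "\<dots> = (\<Sum>j\<in>{True, False}. 1 * prodm (fs[i := (if j then g else h)]) T)"
    by (rule prodm_slot[OF i]) simp
  finally show ?thesis by simp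
qed

lemma prodm_rep_left: "prodm (replicate q one_ser @ xs) = (prodm xs :: 'a::field_char_0 ser)"
proof (induction q)
  case 0 then show ?case by simp
next
  case (Suc q)
  then show ?case using prodm_unit[of "[]" "replicate q one_ser @ xs"] by simp
qed

lemma prodm_rep_right: "prodm (A @ replicate q one_ser) = (prodm A :: 'a::field_char_0 ser)"
proof (induction q)
  case 0 then show ?case by simp
next
  case (Suc q)
  then show ?case using prodm_unit[of A "replicate q one_ser"] by simp
qed

lemma prodm_ones_upd: "i < p \<Longrightarrow> vs W \<Longrightarrow> prodm ((replicate p one_ser)[i := W]) = (W :: 'a::field_char_0 ser)"
proof -
  assume i: "i < p" and W: "vs W"
  have "(replicate p one_ser)[i := W] = replicate i one_ser @ [W] @ replicate (p - Suc i) one_ser"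
    using i by (simp add: upd_conv_take_nth_drop)
  then have "prodm ((replicate p one_ser)[i := W]) = prodm ([W] @ replicate (p - Suc i) one_ser)"
    by (simp only: prodm_rep_left append_assoc)
  also have "\<dots> = prodm [W]" by (rule prodm_rep_right)
  finally show ?thesis using prodm_single_vs[OF W] by simp
qed

definition comps :: "nat \<Rightarrow> nat \<Rightarrow> nat list set" where
  "comps k n = {xs. length xs = k \<and> sum_list xs = n}"

lemma finite_comps: "finite (comps k n)"
proof -
  have "comps k n \<subseteq> {xs. set xs \<subseteq> {..n} \<and> length xs = k}"
    by (auto simp: comps_def member_le_sum_list)
  moreover have "finite {xs. set xs \<subseteq> {..n} \<and> length xs = k}"
    by (rule finite_lists_length_eq) simp
  ultimately show ?thesis by (rule finite_subset)
qed

lemma comps_le: "xs \<in> comps k n \<Longrightarrow> i < k \<Longrightarrow> xs ! i \<le> n"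
  by (auto simp: comps_def member_le_sum_list)

lemma comps_bij:
  assumes i: "i < k"
  shows "bij_betw (\<lambda>xs. xs[i := xs ! i - 1]) {xs \<in> comps k (Suc m). 1 \<le> xs ! i} (comps k m)"
proof (rule bij_betw_byWitness[where f'="\<lambda>js. js[i := js ! i + 1]"])
  show "\<forall>a\<in>{xs \<in> comps k (Suc m). 1 \<le> xs ! i}. (a[i := a ! i - 1])[i := a[i := a ! i - 1] ! i + 1] = a"
    using i by (auto simp: comps_def)
  show "\<forall>a'\<in>comps k m. (a'[i := a' ! i + 1])[i := a'[i := a' ! i + 1] ! i - 1] = a'"
    using i by (auto simp: comps_def)
  show "(\<lambda>xs. xs[i := xs ! i - 1]) ` {xs \<in> comps k (Suc m). 1 \<le> xs ! i} \<subseteq> comps k m"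
  proof
    fix js assume "js \<in> (\<lambda>xs. xs[i := xs ! i - 1]) ` {xs \<in> comps k (Suc m). 1 \<le> xs ! i}"
    then obtain xs where xs: "xs \<in> comps k (Suc m)" "1 \<le> xs ! i" "js = xs[i := xs ! i - 1]" by auto
    have "sum_list (xs[i := xs ! i - 1]) + xs ! i = sum_list xs + (xs ! i - 1)"
      using xs i by (intro sum_list_update_nat) (auto simp: comps_def)
    then show "js \<in> comps k m" using xs by (auto simp: comps_def)
  qed
  show "(\<lambda>js. js[i := js ! i + 1]) ` comps k m \<subseteq> {xs \<in> comps k (Suc m). 1 \<le> xs ! i}"
  proof
    fix xs assume "xs \<in> (\<lambda>js. js[i := js ! i + 1]) ` comps k m"
    then obtain js where js: "js \<in> comps k m" "xs = js[i := js ! i + 1]" by auto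
    have "sum_list (js[i := js ! i + 1]) + js ! i = sum_list js + (js ! i + 1)"
      using js i by (intro sum_list_update_nat) (auto simp: comps_def)
    then show "xs \<in> {xs \<in> comps k (Suc m). 1 \<le> xs ! i}" using js i by (auto simp: comps_def)
  qed
qed

lemma comps_top:
  assumes i: "i < k"
  shows "{xs \<in> comps k n. xs ! i = n} = {(replicate k 0)[i := n]}"
proof
  show "{xs \<in> comps k n. xs ! i = n} \<subseteq> {(replicate k 0)[i := n]}"
  proof
    fix xs assume xs: "xs \<in> {xs \<in> comps k n. xs ! i = n}"
    then have l: "length xs = k" and s: "sum_list xs = n" and ii: "xs ! i = n" by (auto simp: comps_def)
    have "sum_list (xs[i := 0]) + xs ! i = sum_list xs + 0"
      using l i by (intro sum_list_update_nat) auto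
    then have z: "sum_list (xs[i := 0]) = 0" using s ii by simp
    have "\<forall>j<k. j \<noteq> i \<longrightarrow> xs ! j = 0"
    proof (intro allI impI)
      fix j assume j: "j < k" "j \<noteq> i"
      have "xs[i := 0] ! j \<in> set (xs[i := 0])" using j l by (intro nth_mem) simp
      then have "xs[i := 0] ! j = 0" using z by (simp add: sum_list_eq_0_iff)
      then show "xs ! j = 0" using j by simp
    qed
    then have "xs = (replicate k 0)[i := n]"
    proof (intro nth_equalityI)
      fix j assume "\<forall>j<k. j \<noteq> i \<longrightarrow> xs ! j = 0" "j < length xs"
      then show "xs ! j = (replicate k 0)[i := n] ! j" using l ii i by (cases "j = i") auto
    qed (use l in simp)
    then show "xs \<in> {(replicate k 0)[i := n]}" by simp
  qed
  show "{(replicate k 0)[i := n]} \<subseteq> {xs \<in> comps k n. xs ! i = n}"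
  proof -
    have "sum_list ((replicate k 0)[i := n]) + (replicate k 0) ! i = sum_list (replicate k 0) + n"
      using i by (intro sum_list_update_nat) auto
    then show ?thesis using i by (auto simp: comps_def)
  qed
qed

lemma hcomp_props:
  assumes "xseries E"
  shows "fin (hcomp j E)" "vs (hcomp j E)" "ax (hcomp j E)"
proof -
  have s: "series E" and x: "\<forall>T. E T \<noteq> 0 \<longrightarrow> allx T" using assms by (auto simp: xseries_def)
  have "supp (hcomp j E) \<subseteq> {T. degx T = j \<and> E T \<noteq> 0}"
    using x by (auto simp: hcomp_def allx_degx split: if_splits)
  moreover have "finite {T. degx T = j \<and> E T \<noteq> 0}" using s by (simp add: series_def)
  ultimately show "fin (hcomp j E)" unfolding fin_def by (rule finite_subset)
  show "vs (hcomp j E)" using s by (auto simp: vs_def hcomp_def series_def split: if_splits)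
  show "ax (hcomp j E)" using x by (auto simp: ax_def hcomp_def split: if_splits)
qed

lemma exp_rec:
  assumes "is_Exp k E"
  shows "of_nat k ^ n * hcomp n E T = (\<Sum>xs\<in>comps k n. prodm (map (\<lambda>i. hcomp i E) xs) T)"
proof -
  have "(\<lambda>T. of_nat k ^ n * hcomp n E T) =
          (\<lambda>T. \<Sum>xs\<in>{xs. length xs = k \<and> sum_list xs = n}. prodm (map (\<lambda>i. hcomp i E) xs) T)"
    using assms by (simp add: is_Exp_def)
  then show ?thesis unfolding comps_def by metis
qed

lemma pow_ne: "2 \<le> k \<Longrightarrow> 1 \<le> m \<Longrightarrow> (of_nat k ^ Suc m :: 'a::field_char_0) \<noteq> of_nat k"
proof -
  assume k: "2 \<le> k" and m: "1 \<le> m"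
  have "k ^ 1 \<le> k ^ m" using k m by (intro power_increasing) auto
  then have "k * k \<le> k * k ^ m" by simp
  moreover have "k * 2 \<le> k * k" using k by (rule mult_le_mono2)
  moreover have "k < k * 2" using k by simp
  ultimately have "k * k ^ m > k" by linarith
  then have "k ^ Suc m \<noteq> k" by (simp only: power_Suc)
  then show ?thesis by (metis of_nat_eq_iff of_nat_power)
qed


lemma exp_deriv:
  assumes k2: "2 \<le> k" and E: "is_Exp k (E :: 'a::field_char_0 ser)"
  shows "dx (hcomp (Suc m) E) = hcomp m E"
proof (induction m rule: less_induct)
  case (less m)
  define f where "f = (\<lambda>j. hcomp j E)"
  have xE: "xseries E" using E by (simp add: is_Exp_def)
  have fp: "\<And>j. fin (f j) \<and> vs (f j) \<and> ax (f j)" using hcomp_props[OF xE] by (simp add: f_def)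
  have f0: "f 0 = one_ser" and f1: "f 1 = x_ser" using E by (auto simp: is_Exp_def f_def)
  show ?case
  proof (cases "m = 0")
    case True
    then show ?thesis using f0 f1 dx_x unfolding f_def by simp
  next
    case False
    then have m1: "1 \<le> m" by simp
    define n where "n = Suc m"
    define Yv where "Yv = (\<lambda>T. dx (f n) T - f m T)"
    define g where "g = (\<lambda>j. if j = 0 then (\<lambda>_. 0) else f (j - 1))"
    have A: "dx (f j) = (\<lambda>T. g j T + (if j = n then Yv T else 0))" if j: "j \<le> n" for j
    proof (cases "j = 0")
      case True
      then show ?thesis using f0 dx_one n_def by (simp add: g_def)
    next
      case False
      show ?thesis
      proof (cases "j = n")
        case True
        then show ?thesis using False by (simp add: g_def Yv_def n_def)
      next
        case False2: False
        then have "j - 1 < m" using j False n_def by simp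
        then have "dx (f (Suc (j - 1))) = f (j - 1)" using less.IH f_def by blast
        then show ?thesis using False False2 by (simp add: g_def)
      qed
    qed
    have v1: "vs (dx (f n))" using dx_vs fp by blast
    have v2: "vs (f m)" using fp by blast
    have vsY: "vs Yv"
      unfolding vs_def Yv_def
    proof (intro allI impI)
      fix T assume "dx (f n) T - f m T \<noteq> 0"
      then have "dx (f n) T \<noteq> 0 \<or> f m T \<noteq> 0" by auto
      then show "valid T" using v1 v2 by (auto simp: vs_def)
    qed
    have finP: "\<And>xs. fin (prodm (map f xs))"
      using fp by (intro prodm_fin) auto
    have dxrec: "of_nat k ^ n * dx (f n) T =
        (\<Sum>xs\<in>comps k n. \<Sum>i<k. prodm ((map f xs)[i := dx (f (xs ! i))]) T)" for T
    proof -
      have "(\<lambda>T. of_nat k ^ n * f n T) = (\<lambda>T. \<Sum>xs\<in>comps k n. 1 * prodm (map f xs) T)"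
        using exp_rec[OF E] by (simp add: f_def)
      then have "dx (\<lambda>T. of_nat k ^ n * f n T) = dx (\<lambda>T. \<Sum>xs\<in>comps k n. 1 * prodm (map f xs) T)"
        by simp
      also have "\<dots> = (\<lambda>T. \<Sum>xs\<in>comps k n. 1 * dx (prodm (map f xs)) T)"
        by (rule dx_lin) (simp_all add: finite_comps finP)
      finally have ch: "dx (\<lambda>T. of_nat k ^ n * f n T) = (\<lambda>T. \<Sum>xs\<in>comps k n. 1 * dx (prodm (map f xs)) T)" .
      have e1: "dx (\<lambda>T. of_nat k ^ n * f n T) = (\<lambda>T. of_nat k ^ n * dx (f n) T)"
        by (rule dx_scale) (use fp in blast)
      have "(\<lambda>T. of_nat k ^ n * dx (f n) T) = (\<lambda>T. \<Sum>xs\<in>comps k n. 1 * dx (prodm (map f xs)) T)"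
        using ch e1 by simp
      then have "of_nat k ^ n * dx (f n) T = (\<Sum>xs\<in>comps k n. 1 * dx (prodm (map f xs)) T)"
        by (rule fun_cong)
      then have "of_nat k ^ n * dx (f n) T = (\<Sum>xs\<in>comps k n. dx (prodm (map f xs)) T)"
        by simp
      also have "\<dots> = (\<Sum>xs\<in>comps k n. \<Sum>i<k. prodm ((map f xs)[i := dx (f (xs ! i))]) T)"
      proof (rule sum.cong[OF refl])
        fix xs assume "xs \<in> comps k n"
        then have l: "length xs = k" by (simp add: comps_def)
        have "dx (prodm (map f xs)) = (\<lambda>T. \<Sum>i<length (map f xs). prodm ((map f xs)[i := dx (map f xs ! i)]) T)"
          using fp by (intro dx_prodm) auto
        then show "dx (prodm (map f xs)) T = (\<Sum>i<k. prodm ((map f xs)[i := dx (f (xs ! i))]) T)"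
          using l by simp
      qed
      finally show ?thesis .
    qed
    have split: "prodm ((map f xs)[i := dx (f (xs ! i))]) T =
        prodm ((map f xs)[i := g (xs ! i)]) T + (if xs ! i = n then prodm ((map f xs)[i := Yv]) T else 0)"
      if xs: "xs \<in> comps k n" and i: "i < k" for xs i T
    proof -
      have l: "i < length (map f xs)" using xs i by (simp add: comps_def)
      have "prodm ((map f xs)[i := dx (f (xs ! i))]) T =
            prodm ((map f xs)[i := (\<lambda>T. g (xs ! i) T + (if xs ! i = n then Yv T else 0))]) T"
        using A[OF comps_le[OF xs i]] by simp
      also have "\<dots> = prodm ((map f xs)[i := g (xs ! i)]) T + prodm ((map f xs)[i := (\<lambda>T. if xs ! i = n then Yv T else 0)]) T"
        by (rule prodm_slot_add[OF l])
      also have "prodm ((map f xs)[i := (\<lambda>T. if xs ! i = n then Yv T else 0)]) T =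
                 (if xs ! i = n then prodm ((map f xs)[i := Yv]) T else 0)"
        using prodm_upd_zero[OF l] by (cases "xs ! i = n") (auto simp: fun_eq_iff)
      finally show ?thesis .
    qed
    have S1: "(\<Sum>xs\<in>comps k n. \<Sum>i<k. prodm ((map f xs)[i := g (xs ! i)]) T) = of_nat k * (of_nat k ^ m * f m T)" for T
    proof -
      have "(\<Sum>xs\<in>comps k n. \<Sum>i<k. prodm ((map f xs)[i := g (xs ! i)]) T) =
            (\<Sum>i<k. \<Sum>xs\<in>comps k n. prodm ((map f xs)[i := g (xs ! i)]) T)"
        by (rule sum.swap)
      also have "\<dots> = (\<Sum>i<k. of_nat k ^ m * f m T)"
      proof (rule sum.cong[OF refl])
        fix i assume "i \<in> {..<k}"
        then have i: "i < k" by simp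
        have "(\<Sum>xs\<in>comps k n. prodm ((map f xs)[i := g (xs ! i)]) T) =
              (\<Sum>xs\<in>{xs \<in> comps k n. 1 \<le> xs ! i}. prodm ((map f xs)[i := g (xs ! i)]) T)"
        proof (rule sum.mono_neutral_right[OF finite_comps])
          show "{xs \<in> comps k n. 1 \<le> xs ! i} \<subseteq> comps k n" by auto
          show "\<forall>xs\<in>comps k n - {xs \<in> comps k n. 1 \<le> xs ! i}. prodm ((map f xs)[i := g (xs ! i)]) T = 0"
          proof
            fix xs assume xs: "xs \<in> comps k n - {xs \<in> comps k n. 1 \<le> xs ! i}"
            then have z: "xs ! i = 0" and l: "i < length (map f xs)" using i by (auto simp: comps_def)
            show "prodm ((map f xs)[i := g (xs ! i)]) T = 0" using prodm_upd_zero[OF l] z by (simp add: g_def)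
          qed
        qed
        also have "\<dots> = (\<Sum>xs\<in>{xs \<in> comps k n. 1 \<le> xs ! i}. prodm (map f (xs[i := xs ! i - 1])) T)"
          by (rule sum.cong[OF refl]) (simp add: g_def map_update)
        also have "\<dots> = (\<Sum>js\<in>comps k m. prodm (map f js) T)"
          unfolding n_def by (rule sum.reindex_bij_betw[OF comps_bij[OF i]])
        also have "\<dots> = of_nat k ^ m * f m T"
          using exp_rec[OF E, of m T] by (simp add: f_def)
        finally show "(\<Sum>xs\<in>comps k n. prodm ((map f xs)[i := g (xs ! i)]) T) = of_nat k ^ m * f m T" .
      qed
      also have "\<dots> = of_nat k * (of_nat k ^ m * f m T)" by simp
      finally show ?thesis .
    qed
    have S2: "(\<Sum>xs\<in>comps k n. \<Sum>i<k. if xs ! i = n then prodm ((map f xs)[i := Yv]) T else 0) = of_nat k * Yv T" for T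
    proof -
      have "(\<Sum>xs\<in>comps k n. \<Sum>i<k. if xs ! i = n then prodm ((map f xs)[i := Yv]) T else 0) =
            (\<Sum>i<k. \<Sum>xs\<in>comps k n. if xs ! i = n then prodm ((map f xs)[i := Yv]) T else 0)"
        by (rule sum.swap)
      also have "\<dots> = (\<Sum>i<k. Yv T)"
      proof (rule sum.cong[OF refl])
        fix i assume "i \<in> {..<k}"
        then have i: "i < k" by simp
        have "(\<Sum>xs\<in>comps k n. if xs ! i = n then prodm ((map f xs)[i := Yv]) T else 0) =
              (\<Sum>xs\<in>{xs \<in> comps k n. xs ! i = n}. prodm ((map f xs)[i := Yv]) T)"
          by (rule sum.inter_filter[OF finite_comps, symmetric])
        also have "\<dots> = prodm ((map f ((replicate k 0)[i := n]))[i := Yv]) T"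
          unfolding comps_top[OF i] by simp
        also have "(map f ((replicate k 0)[i := n]))[i := Yv] = (replicate k one_ser)[i := Yv]"
          by (simp add: map_update f0)
        also have "prodm ((replicate k one_ser)[i := Yv]) = Yv"
          by (rule prodm_ones_upd[OF i vsY])
        finally show "(\<Sum>xs\<in>comps k n. if xs ! i = n then prodm ((map f xs)[i := Yv]) T else 0) = Yv T" .
      qed
      also have "\<dots> = of_nat k * Yv T" by simp
      finally show ?thesis .
    qed
    have "Yv T = 0" for T
    proof -
      have "(\<Sum>xs\<in>comps k n. \<Sum>i<k. prodm ((map f xs)[i := dx (f (xs ! i))]) T) =
            (\<Sum>xs\<in>comps k n. \<Sum>i<k. prodm ((map f xs)[i := g (xs ! i)]) T +
                 (if xs ! i = n then prodm ((map f xs)[i := Yv]) T else 0))"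
        by (rule sum.cong[OF refl], rule sum.cong[OF refl], rule split) auto
      also have "\<dots> = (\<Sum>xs\<in>comps k n. \<Sum>i<k. prodm ((map f xs)[i := g (xs ! i)]) T) +
            (\<Sum>xs\<in>comps k n. \<Sum>i<k. if xs ! i = n then prodm ((map f xs)[i := Yv]) T else 0)"
        by (simp only: sum.distrib)
      finally have "of_nat k ^ n * dx (f n) T = of_nat k * (of_nat k ^ m * f m T) + of_nat k * Yv T"
        using dxrec[of T] S1[of T] S2[of T] by simp
      moreover have "dx (f n) T = f m T + Yv T" by (simp add: Yv_def)
      moreover have pw: "(of_nat k ^ n :: 'a) = of_nat k * of_nat k ^ m" by (simp add: n_def)
      ultimately have "of_nat k ^ n * f m T + of_nat k ^ n * Yv T = of_nat k ^ n * f m T + of_nat k * Yv T"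
        by (simp only: distrib_left pw mult.assoc)
      then have "of_nat k ^ n * Yv T = of_nat k * Yv T" by simp
      then have "(of_nat k ^ n - of_nat k) * Yv T = 0" by (simp add: left_diff_distrib)
      moreover have "(of_nat k ^ n :: 'a) - of_nat k \<noteq> 0" using pow_ne[OF k2 m1] n_def by simp
      ultimately show ?thesis by simp
    qed
    then show ?thesis by (simp add: Yv_def f_def n_def fun_eq_iff)
  qed
qed

lemma subst_zero: "subst a b (\<lambda>_. 0) = (\<lambda>_. 0 :: 'a::field_char_0)"
  by (simp add: subst_def fun_eq_iff)

lemma subst_one: "subst a b one_ser = (one_ser :: 'a::field_char_0 ser)"
  by (simp add: one_ser_delta subst_delta phi_oneP[folded one_ser_delta])

lemma chain_rule:
  fixes U :: "'a::field_char_0 ser"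
  assumes U: "fin U" "vs U" "ax U" and dU: "eqlow M (dx U) (\<lambda>T. one_ser T + U T)"
  shows "allx S \<Longrightarrow> valid S \<Longrightarrow> eqlow M (dx (phi_tree U y_ser S))
           (\<lambda>T. subst U y_ser (Dt S) T + of_nat (nleaves S) * phi_tree U y_ser S T)"
proof (induction S)
  case (Leaf x)
  then have "x = X" by simp
  then show ?case using dU by (simp add: Dt_X subst_one)
next
  case (Node ts)
  let ?phi = "phi_tree U y_ser :: ptree \<Rightarrow> 'a ser"
  show ?case
  proof (cases "ts = []")
    case True
    then show ?thesis by (simp add: phi_oneP dx_one oneP_def[symmetric] Dt_oneP subst_zero eqlow_def)
  next
    case False
    then have r: "reduced (Node ts)" using Node.prems by (auto simp: valid_def oneP_def)
    then have vts: "\<forall>t\<in>set ts. valid t" by (auto simp: valid_def)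
    have axts: "\<forall>t\<in>set ts. allx t" using Node.prems by simp
    define fs where "fs = map ?phi ts"
    have fsp: "\<forall>f\<in>set fs. fin f \<and> vs f \<and> ax f"
      using U axts by (auto simp: fs_def intro: phi_fin phi_vs phi_ax vs_y fin_y)
    have lfs: "length fs = length ts" by (simp add: fs_def)
    show ?thesis
      unfolding eqlow_def
    proof (intro allI impI)
      fix T assume T: "nleaves T < M"
      have "dx (?phi (Node ts)) T = (\<Sum>i<length ts. prodm (fs[i := dx (fs ! i)]) T)"
        using dx_prodm[OF fsp] lfs by (simp add: fs_def)
      also have "\<dots> = (\<Sum>i<length ts. prodm (fs[i := (\<lambda>T. subst U y_ser (Dt (ts ! i)) T + of_nat (nleaves (ts ! i)) * ?phi (ts ! i) T)]) T)"
      proof (rule sum.cong[OF refl])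
        fix i assume "i \<in> {..<length ts}"
        then have i: "i < length ts" by simp
        have "eqlow M (dx (fs ! i)) (\<lambda>T. subst U y_ser (Dt (ts ! i)) T + of_nat (nleaves (ts ! i)) * ?phi (ts ! i) T)"
          using Node.IH[of "ts ! i"] i axts vts by (simp add: fs_def)
        then have "eqlow M (prodm (fs[i := dx (fs ! i)])) (prodm (fs[i := (\<lambda>T. subst U y_ser (Dt (ts ! i)) T + of_nat (nleaves (ts ! i)) * ?phi (ts ! i) T)]))"
          by (rule prodm_eqlow)
        then show "prodm (fs[i := dx (fs ! i)]) T = prodm (fs[i := (\<lambda>T. subst U y_ser (Dt (ts ! i)) T + of_nat (nleaves (ts ! i)) * ?phi (ts ! i) T)]) T"
          using T by (simp add: eqlow_def)
      qed
      also have "\<dots> = (\<Sum>i<length ts. prodm (fs[i := subst U y_ser (Dt (ts ! i))]) T + of_nat (nleaves (ts ! i)) * prodm fs T)"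
      proof (rule sum.cong[OF refl])
        fix i assume "i \<in> {..<length ts}"
        then have i: "i < length fs" using lfs by simp
        have "prodm (fs[i := (\<lambda>T. subst U y_ser (Dt (ts ! i)) T + of_nat (nleaves (ts ! i)) * ?phi (ts ! i) T)]) T =
              prodm (fs[i := (\<lambda>T. \<Sum>j\<in>{True, False}. (if j then 1 else of_nat (nleaves (ts ! i))) * (if j then subst U y_ser (Dt (ts ! i)) else ?phi (ts ! i)) T)]) T"
          by simp
        also have "\<dots> = (\<Sum>j\<in>{True, False}. (if j then 1 else of_nat (nleaves (ts ! i))) * prodm (fs[i := (if j then subst U y_ser (Dt (ts ! i)) else ?phi (ts ! i))]) T)"
          by (rule prodm_slot[OF i]) simp
        also have "\<dots> = prodm (fs[i := subst U y_ser (Dt (ts ! i))]) T + of_nat (nleaves (ts ! i)) * prodm (fs[i := ?phi (ts ! i)]) T"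
          by simp
        also have "fs[i := ?phi (ts ! i)] = fs" using i by (simp add: fs_def map_update[symmetric])
        finally show "prodm (fs[i := (\<lambda>T. subst U y_ser (Dt (ts ! i)) T + of_nat (nleaves (ts ! i)) * ?phi (ts ! i) T)]) T =
              prodm (fs[i := subst U y_ser (Dt (ts ! i))]) T + of_nat (nleaves (ts ! i)) * prodm fs T" .
      qed
      also have "\<dots> = (\<Sum>i<length ts. prodm (fs[i := subst U y_ser (Dt (ts ! i))]) T) + of_nat (nleaves (Node ts)) * ?phi (Node ts) T"
      proof -
        have "(\<Sum>i<length ts. of_nat (nleaves (ts ! i)) * prodm fs T) = of_nat (\<Sum>i<length ts. nleaves (ts ! i)) * prodm fs T"
          by (simp add: sum_distrib_right)
        also have "(\<Sum>i<length ts. nleaves (ts ! i)) = nleaves (Node ts)"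
          by (simp add: sum_list_idx)
        finally show ?thesis by (simp add: sum.distrib fs_def)
      qed
      also have "(\<Sum>i<length ts. prodm (fs[i := subst U y_ser (Dt (ts ! i))]) T) = subst U y_ser (Dt (Node ts)) T"
      proof -
        have gp: "\<forall>g\<in>set ((map delta ts)[i := Dt (ts ! i)]). fin g \<and> vs g" for i :: nat
        proof
          fix g assume "g \<in> set ((map delta ts)[i := Dt (ts ! i)])"
          then have "g \<in> set (map delta ts) \<or> g = Dt (ts ! i)" by (meson set_update_subset_insert insertE subsetD)
          then show "fin g \<and> vs g" using vts by (auto simp: Dt_fin Dt_vs vs_delta)
        qed
        have "subst U y_ser (Dt (Node ts)) = subst U y_ser (\<lambda>T. \<Sum>i<length ts. 1 * prodm ((map delta ts)[i := Dt (ts ! i)]) T)"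
          unfolding Dt_node[OF Node.prems(1) vts] by simp
        also have "\<dots> = (\<lambda>T. \<Sum>i<length ts. 1 * subst U y_ser (prodm ((map delta ts)[i := Dt (ts ! i)])) T)"
          using gp by (intro subst_lin) (auto intro: prodm_fin)
        also have "\<dots> = (\<lambda>T. \<Sum>i<length ts. prodm (fs[i := subst U y_ser (Dt (ts ! i))]) T)"
        proof (rule ext, rule sum.cong[OF refl])
          fix T i
          have "subst U y_ser (prodm ((map delta ts)[i := Dt (ts ! i)])) = prodm (map (subst U y_ser) ((map delta ts)[i := Dt (ts ! i)]))"
            using gp U(2) vs_y by (intro subst_prodm) auto
          also have "map (subst U y_ser) ((map delta ts)[i := Dt (ts ! i)]) = fs[i := subst U y_ser (Dt (ts ! i))]"
            by (simp add: map_update fs_def comp_def subst_delta)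
          finally show "1 * subst U y_ser (prodm ((map delta ts)[i := Dt (ts ! i)])) T = prodm (fs[i := subst U y_ser (Dt (ts ! i))]) T"
            by simp
        qed
        finally show ?thesis by simp
      qed
      finally show "dx (?phi (Node ts)) T = subst U y_ser (Dt (Node ts)) T + of_nat (nleaves (Node ts)) * ?phi (Node ts) T" .
    qed
  qed
qed

lemma hcomp_apply: "hcomp j F T = (if nleaves T = j then F T else 0)"
  by (simp add: hcomp_def)

lemma sum_hcomp: "(\<Sum>j\<in>A. hcomp j F T) = (if nleaves T \<in> A then F T else (0::'a::field_char_0))" if "finite A"
proof -
  have "(\<Sum>j\<in>A. hcomp j F T) = (\<Sum>j\<in>A. if nleaves T = j then F T else 0)"
    by (simp add: hcomp_apply)
  also have "\<dots> = (if nleaves T \<in> A then F T else 0)" using that by (simp add: sum.delta)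
  finally show ?thesis .
qed

lemma exp_low:
  assumes E: "is_Exp k (E :: 'a::field_char_0 ser)"
  shows "nleaves T = 0 \<Longrightarrow> E T = one_ser T" and "nleaves T = 1 \<Longrightarrow> E T = x_ser T"
proof -
  have "hcomp 0 E = one_ser" "hcomp 1 E = x_ser" using E by (auto simp: is_Exp_def)
  then show "nleaves T = 0 \<Longrightarrow> E T = one_ser T" "nleaves T = 1 \<Longrightarrow> E T = x_ser T"
    by (metis hcomp_apply)+
qed

lemma one_ser_pos: "1 \<le> nleaves T \<Longrightarrow> one_ser T = 0"
  by (auto simp: one_ser_def)

lemma U_facts:
  assumes k2: "2 \<le> k" and E: "is_Exp k (E :: 'a::field_char_0 ser)" and M: "1 \<le> M"
    and U_def: "U = (\<lambda>T. \<Sum>j\<in>{1..M}. 1 * hcomp j E T)"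
  shows "U T = (if 1 \<le> nleaves T \<and> nleaves T \<le> M then E T else 0)"
    and "fin U" "vs U" "ax U" "low1 U" "\<forall>T. nleaves T = 1 \<longrightarrow> U T = x_ser T"
    and "eqlow M (dx U) (\<lambda>T. one_ser T + U T)"
    and "\<forall>s. nleaves s \<le> M \<longrightarrow> E s - one_ser s = U s"
proof -
  have xE: "xseries E" using E by (simp add: is_Exp_def)
  note hp = hcomp_props[OF xE]
  show Uf: "U T = (if 1 \<le> nleaves T \<and> nleaves T \<le> M then E T else 0)" for T
    unfolding U_def by (simp add: sum_hcomp)
  show "fin U" unfolding U_def by (rule fin_sum) (auto simp: hp)
  show "vs U" unfolding U_def by (rule vs_sum) (auto simp: hp)
  show "ax U" unfolding U_def by (rule ax_sum) (auto simp: hp)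
  show "low1 U" using Uf by (auto simp: low1_def)
  show "\<forall>T. nleaves T = 1 \<longrightarrow> U T = x_ser T" using Uf exp_low(2)[OF E] M by auto
  show "\<forall>s. nleaves s \<le> M \<longrightarrow> E s - one_ser s = U s"
  proof (intro allI impI)
    fix s assume s: "nleaves s \<le> M"
    show "E s - one_ser s = U s"
    proof (cases "nleaves s = 0")
      case True then show ?thesis using Uf exp_low(1)[OF E] by simp
    next
      case False then show ?thesis using Uf s one_ser_pos[of s] by simp
    qed
  qed
  show "eqlow M (dx U) (\<lambda>T. one_ser T + U T)"
    unfolding eqlow_def
  proof (intro allI impI)
    fix T assume T: "nleaves T < M"
    have "dx U = (\<lambda>T. \<Sum>j\<in>{1..M}. 1 * dx (hcomp j E) T)"
      unfolding U_def by (rule dx_lin) (auto simp: hp)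
    also have "\<dots> = (\<lambda>T. \<Sum>j\<in>{1..M}. 1 * hcomp (j - 1) E T)"
    proof (rule ext, rule sum.cong[OF refl])
      fix T j assume "j \<in> {1..M}"
      then obtain i where i: "j = Suc i" by (cases j) auto
      have "dx (hcomp j E) = hcomp (j - 1) E" unfolding i using exp_deriv[OF k2 E, of i] by simp
      then show "1 * dx (hcomp j E) T = 1 * hcomp (j - 1) E T" by simp
    qed
    finally have "dx U T = (\<Sum>j\<in>{1..M}. 1 * hcomp (j - 1) E T)" by simp
    also have "\<dots> = (\<Sum>j\<in>{0..M - 1}. 1 * hcomp j E T)"
    proof -
      obtain M' where M': "M = Suc M'" using M by (cases M) auto
      have "(\<Sum>j\<in>{Suc 0..Suc M'}. 1 * hcomp (j - 1) E T) = (\<Sum>j\<in>{0..M'}. 1 * hcomp (Suc j - 1) E T)"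
        by (rule sum.shift_bounds_cl_Suc_ivl)
      then show ?thesis using M' by simp
    qed
    also have "\<dots> = E T"
    proof -
      have "nleaves T \<in> {0..M - 1}" using T by simp
      then show ?thesis by (simp add: sum_hcomp)
    qed
    also have "\<dots> = one_ser T + U T"
    proof (cases "nleaves T = 0")
      case True then show ?thesis using Uf exp_low(1)[OF E] by simp
    next
      case False then show ?thesis using Uf T one_ser_pos[of T] by simp
    qed
    finally show "dx U T = one_ser T + U T" .
  qed
qed

lemma xseries_facts:
  assumes "xseries (h :: 'a::field_char_0 ser)"
  shows "\<And>T. h T \<noteq> 0 \<Longrightarrow> valid T" "\<And>T. h T \<noteq> 0 \<Longrightarrow> allx T"
    and "finite {T. nleaves T \<le> N \<and> h T \<noteq> 0}"
proof -
  show v: "\<And>T. h T \<noteq> 0 \<Longrightarrow> valid T" "\<And>T. h T \<noteq> 0 \<Longrightarrow> allx T"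
    using assms by (auto simp: xseries_def series_def)
  have "{T. nleaves T \<le> N \<and> h T \<noteq> 0} \<subseteq> (\<Union>j\<in>{..N}. {T. degx T = j \<and> h T \<noteq> 0})"
    using v(2) allx_degx by fastforce
  moreover have "finite (\<Union>j\<in>{..N}. {T. degx T = j \<and> h T \<noteq> 0})"
    using assms by (auto simp: xseries_def series_def)
  ultimately show "finite {T. nleaves T \<le> N \<and> h T \<noteq> 0}" by (rule finite_subset)
qed

lemma main_n:
  assumes k2: "2 \<le> k" and E: "is_Exp k (E :: 'a::field_char_0 ser)" and Lg: "is_Log k E h" and n1: "1 \<le> n"
  shows "dx (hcomp (Suc n) h) T0 = - of_nat n * hcomp n h T0"
proof -
  define M where "M = n + 2"
  define U where "U = (\<lambda>T. \<Sum>j\<in>{1..M}. 1 * hcomp j E T)"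
  have M1: "1 \<le> M" by (simp add: M_def)
  note UF = U_facts[OF k2 E M1 U_def]
  have xh: "xseries h" and L: "subst (\<lambda>T. E T - one_ser T) y_ser h = x_ser" using Lg by (auto simp: is_Log_def)
  note hf = xseries_facts[OF xh]
  define u where "u = (\<lambda>T. E T - one_ser T)"
  have agree: "\<forall>s. nleaves s \<le> M \<longrightarrow> u s = U s" using UF(8) by (simp add: u_def)
  have low1u: "low1 u"
  proof -
    have "u s = 0" if "nleaves s = 0" for s using agree that UF(1) by (metis le0 not_one_le_zero)
    then show ?thesis by (auto simp: low1_def) (metis One_nat_def Suc_leI neq0_conv)
  qed
  define H where "H = (\<lambda>T. if nleaves T \<le> Suc n then h T else 0)"
  have suppH: "supp H = {T. nleaves T \<le> Suc n \<and> h T \<noteq> 0}" by (auto simp: H_def)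
  have finH: "fin H" unfolding fin_def suppH by (rule hf(3))
  have vsH: "vs H" and axH: "ax H" using hf by (auto simp: vs_def ax_def H_def split: if_splits)
  have phU: "\<And>S. fin (phi_tree U y_ser S) \<and> vs (phi_tree U y_ser S)"
    using UF(2,3) fin_y vs_y by (auto intro: phi_fin phi_vs)
  define Fx where "Fx = subst U y_ser H"
  have finFx: "fin Fx" and vsFx: "vs Fx" and axFx: "ax Fx"
    unfolding Fx_def using finH axH UF(2,3,4) fin_y vs_y by (auto intro: subst_fin subst_vs subst_ax)
  have e1: "eqlow (Suc (Suc n)) Fx x_ser"
    unfolding eqlow_def
  proof (intro allI impI)
    fix T assume T: "nleaves T < Suc (Suc n)"
    have eq: "H S * phi_tree U y_ser S T = h S * phi_tree u y_ser S T" for S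
    proof (cases "nleaves S \<le> nleaves T")
      case True
      then have "H S = h S" using T by (simp add: H_def)
      moreover have "phi_tree u y_ser S T = phi_tree U y_ser S T"
        using agree T M_def by (intro phi_loc) auto
      ultimately show ?thesis by simp
    next
      case False
      then have "phi_tree u y_ser S T = 0" "phi_tree U y_ser S T = 0"
        using phi_low[OF low1u low1_y] phi_low[OF UF(5) low1_y] by force+
      then show ?thesis by simp
    qed
    have "Fx T = subst u y_ser h T" unfolding Fx_def subst_def eq ..
    then show "Fx T = x_ser T" using L by (simp add: u_def)
  qed
  have e2: "eqlow (Suc n) (dx Fx) one_ser"
    using dx_eqlow[OF finFx vsFx axFx fin_x vs_x ax_x e1] by (simp add: dx_x)
  have fsH: "finite (supp H)" using finH by (simp add: fin_def)
  have FxE: "Fx = (\<lambda>T. \<Sum>S\<in>supp H. H S * phi_tree U y_ser S T)"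
    unfolding Fx_def using finH fsH by (intro ext subst_expand) auto
  have dxFx: "dx Fx = (\<lambda>T. \<Sum>S\<in>supp H. H S * dx (phi_tree U y_ser S) T)"
    unfolding FxE using phU fsH by (intro dx_lin) auto
  define W where "W = (\<lambda>T. of_nat (nleaves T) * H T)"
  define c where "c = (\<lambda>j::nat. if j = 2 then (-1::'a) else 1)"
  define G where "G = (\<lambda>j::nat. if j = 0 then dx H else if j = 1 then W else one_ser)"
  define Gs where "Gs = (\<lambda>T. \<Sum>j\<in>{0,1,2}. c j * G j T)"
  have GsE: "Gs T = dx H T + W T - one_ser T" for T by (simp add: Gs_def c_def G_def)
  have suppW: "supp W \<subseteq> supp H" by (auto simp: W_def)
  have finW: "fin W" using finH suppW unfolding fin_def by (rule finite_subset[rotated])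
  have vsW: "vs W" and axW: "ax W" using vsH axH by (auto simp: W_def vs_def ax_def)
  have Gp: "\<forall>j\<in>{0,1,2}. fin (G j) \<and> vs (G j) \<and> ax (G j)"
    using finH vsH axH finW vsW axW fin_one vs_one ax_one dx_fin dx_vs dx_ax by (auto simp: G_def)
  have finGs: "fin Gs" unfolding Gs_def using Gp by (intro fin_sum) auto
  have vsGs: "vs Gs" unfolding Gs_def using Gp by (intro vs_sum) auto
  have axGs: "ax Gs" unfolding Gs_def using Gp by (intro ax_sum) auto
  have sGs: "subst U y_ser Gs T = 0" if T: "nleaves T < Suc n" for T
  proof -
    have "subst U y_ser Gs = (\<lambda>T. \<Sum>j\<in>{0,1,2}. c j * subst U y_ser (G j) T)"
      unfolding Gs_def using Gp by (intro subst_lin) auto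
    then have "subst U y_ser Gs T = subst U y_ser (dx H) T + subst U y_ser W T - subst U y_ser one_ser T"
      by (simp add: c_def G_def)
    also have "subst U y_ser one_ser T = one_ser T" by (simp add: subst_one)
    also have "subst U y_ser W T = (\<Sum>S\<in>supp H. W S * phi_tree U y_ser S T)"
      using finW fsH suppW by (intro subst_expand) auto
    also have "subst U y_ser (dx H) T = (\<Sum>S\<in>supp H. H S * subst U y_ser (Dt S) T)"
    proof -
      have "dx H = (\<lambda>T. \<Sum>S\<in>supp H. H S * Dt S T)" using finH fsH by (intro dx_expand) auto
      then have "subst U y_ser (dx H) = subst U y_ser (\<lambda>T. \<Sum>S\<in>supp H. H S * Dt S T)" by simp
      also have "\<dots> = (\<lambda>T. \<Sum>S\<in>supp H. H S * subst U y_ser (Dt S) T)"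
        using fsH by (intro subst_lin) (auto simp: Dt_fin)
      finally show ?thesis by simp
    qed
    finally have "subst U y_ser Gs T = (\<Sum>S\<in>supp H. H S * subst U y_ser (Dt S) T) + (\<Sum>S\<in>supp H. W S * phi_tree U y_ser S T) - one_ser T" .
    also have "(\<Sum>S\<in>supp H. H S * subst U y_ser (Dt S) T) + (\<Sum>S\<in>supp H. W S * phi_tree U y_ser S T) =
               (\<Sum>S\<in>supp H. H S * dx (phi_tree U y_ser S) T)"
    proof -
      have "(\<Sum>S\<in>supp H. H S * subst U y_ser (Dt S) T) + (\<Sum>S\<in>supp H. W S * phi_tree U y_ser S T) =
            (\<Sum>S\<in>supp H. H S * (subst U y_ser (Dt S) T + of_nat (nleaves S) * phi_tree U y_ser S T))"
        by (simp add: sum.distrib W_def algebra_simps)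
      also have "\<dots> = (\<Sum>S\<in>supp H. H S * dx (phi_tree U y_ser S) T)"
      proof (rule sum.cong[OF refl])
        fix S assume "S \<in> supp H"
        then have S: "allx S" "valid S" using vsH axH by (auto simp: vs_def ax_def)
        have "eqlow M (dx (phi_tree U y_ser S)) (\<lambda>T. subst U y_ser (Dt S) T + of_nat (nleaves S) * phi_tree U y_ser S T)"
          by (rule chain_rule[OF UF(2,3,4,7) S])
        then show "H S * (subst U y_ser (Dt S) T + of_nat (nleaves S) * phi_tree U y_ser S T) = H S * dx (phi_tree U y_ser S) T"
          using T by (simp add: eqlow_def M_def)
      qed
      finally show ?thesis .
    qed
    also have "(\<Sum>S\<in>supp H. H S * dx (phi_tree U y_ser S) T) = one_ser T"
      using e2 T dxFx by (simp add: eqlow_def)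
    finally show ?thesis by simp
  qed
  have Gs0: "\<forall>T. nleaves T < Suc n \<longrightarrow> Gs T = 0"
    by (rule tri[OF UF(5,6) finGs vsGs axGs]) (use sGs in auto)
  have dxH: "dx H T = dx (hcomp (Suc n) h) T" if T: "nleaves T = n" for T
  proof -
    have s2: "supp (hcomp (Suc n) h) \<subseteq> supp H" by (auto simp: H_def hcomp_def)
    have f2: "fin (hcomp (Suc n) h)" using finH s2 unfolding fin_def by (rule finite_subset[rotated])
    have "dx H T = (\<Sum>S\<in>supp H. H S * Dt S T)" using dx_expand[OF finH fsH] by simp
    also have "\<dots> = (\<Sum>S\<in>supp H. hcomp (Suc n) h S * Dt S T)"
    proof (rule sum.cong[OF refl])
      fix S assume "S \<in> supp H"
      then have S: "allx S" "valid S" using vsH axH by (auto simp: vs_def ax_def)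
      show "H S * Dt S T = hcomp (Suc n) h S * Dt S T"
      proof (cases "Dt S T = (0::'a)")
        case False
        then have "nleaves S = Suc n" using Dt_props[OF S] T by force
        then show ?thesis by (simp add: H_def hcomp_def)
      qed simp
    qed
    also have "\<dots> = dx (hcomp (Suc n) h) T" using dx_expand[OF f2 fsH s2] by simp
    finally show ?thesis .
  qed
  show ?thesis
  proof (cases "nleaves T0 = n")
    case True
    then have "Gs T0 = 0" using Gs0 by simp
    then have "dx H T0 + of_nat n * h T0 = 0"
      using True n1 one_ser_pos[of T0] by (simp add: GsE W_def H_def)
    then show ?thesis using dxH[OF True] True by (simp add: hcomp_def eq_neg_iff_add_eq_0)
  next
    case False
    have s2: "supp (hcomp (Suc n) h) \<subseteq> supp H" by (auto simp: H_def hcomp_def)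
    have f2: "fin (hcomp (Suc n) h)" using finH s2 unfolding fin_def by (rule finite_subset[rotated])
    have "vs (hcomp (Suc n) h)" "ax (hcomp (Suc n) h)" using hf by (auto simp: vs_def ax_def hcomp_def)
    then have "dx (hcomp (Suc n) h) T0 = 0"
      using dx_props[OF f2] False by (fastforce simp: hcomp_def split: if_splits)
    then show ?thesis using False by (simp add: hcomp_def)
  qed
qed


theorem corollary7p3:
  fixes k :: nat and E h :: "'a::field_char_0 ser"
  assumes "k \<ge> 2" and "is_Exp k E" and "is_Log k E h"
  shows "hcomp 0 h = (\<lambda>T. 0) \<and>
         (\<forall>n\<ge>1. dx (hcomp (Suc n) h) = (\<lambda>T. - (of_nat n) * hcomp n h T))"
proof
  have xh: "xseries h" and h0: "h oneP = 0" using assms(3) by (auto simp: is_Log_def)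
  note hf = xseries_facts[OF xh]
  show "hcomp 0 h = (\<lambda>T. 0)"
  proof
    fix T
    show "hcomp 0 h T = 0"
    proof (cases "h T = 0")
      case False
      then have "valid T" using hf(1) by blast
      then show ?thesis using h0 valid_nleaves0 by (auto simp: hcomp_def)
    qed (simp add: hcomp_def)
  qed
  show "\<forall>n\<ge>1. dx (hcomp (Suc n) h) = (\<lambda>T. - (of_nat n) * hcomp n h T)"
    using main_n[OF assms] by blast
qed

end
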